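(* Let $(X,x)$ be a pointed diffeological space and let $\mathcal{G}$ be a local generating category of $X$ at $x$. Then there is a natural epimorphism of vector spaces from $\operatorname{colim}(\mathcal{G} \hookrightarrow \mathcal{G}(X,x) \to \mathrm{Vect})$ to $T_x(X)$. Moreover, if $\mathcal{G}$ is a final subcategory of $\mathcal{G}(X,x)$, then this map is an isomorphism.
   Context: A diffeological space is a set $X$ together with, for every open subset $U$ of every $\mathbb{R}^n$, a set of functions $U\to X$ called plots, such that constant maps are plots, the composite of a plot with a smooth map $V\to U$ between open subsets of Euclidean spaces is a plot, and a function which is locally a plot (on an open cover) is a plot. Smooth maps are maps sending plots to plots. For a pointed diffeological space $(X,x)$, let $\mathcal{G}(X,x)$ be the category whose objects are the plots $p:U\to X$ with $U$ a connected open neighbourhood of $0$ in some $\mathbb{R}^n$ and $p(0)=x$, and whose morphisms from $p:U\to X$ to $q:V\to X$ are germs at $0$ of smooth maps $f:W\to V$ with $W$ an open neighbourhood of $0$ in $U$, $f(0)=0$ and $p|_W=q\circ f$. The functor $\mathcal{G}(X,x)\to \mathrm{Vect}$ (real vector spaces) sends $p:U\to X$ to $T_0(U)$ and $[f]$ to the differential $f_*:T_0(U)\to T_0(V)$; the internal tangent space $T_x(X)$ is the colimit of this functor. A local generating set of $X$ at $x$ is a subset $G$ of the objects of $\mathcal{G}(X,x)$ such that for every object $p$ there is some $q\in G$ and a morphism $p\to q$ in $\mathcal{G}(X,x)$; a local generating category of $X$ at $x$ is a subcategory of $\mathcal{G}(X,x)$ whose set of objects is a local generating set. A subcategory $\mathcal{G}$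 is final if for every object $p$ of $\mathcal{G}(X,x)$ the comma category $p/\mathcal{G}$ is non-empty and connected. *)

theory Defs
  imports "HOL-Analysis.Analysis" "HOL-Library.Function_Algebras"
begin

instantiation "fun" :: (type, real_vector) real_vector
begin
definition scaleR_fun :: "real \<Rightarrow> ('a \<Rightarrow> 'b) \<Rightarrow> 'a \<Rightarrow> 'b"
  where "scaleR_fun c f = (\<lambda>x. c *\<^sub>R f x)"
instance
  by standard (simp_all add: scaleR_fun_def fun_eq_iff scaleR_add_right scaleR_add_left)
end

text \<open>The topology on nat => real is the product topology (Function_Topology),
  whose restriction to euclid n is the usual Euclidean topology.\<close>

type_synonym pt = "nat \<Rightarrow> real"

definition euclid :: "nat \<Rightarrow> pt set" where
  "euclid n = {v. \<forall>i\<ge>n. v i = 0}"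

definition openR :: "nat \<Rightarrow> pt set \<Rightarrow> bool" where
  "openR n U \<longleftrightarrow> U \<subseteq> euclid n \<and> openin (top_of_set (euclid n)) U"

definition pd :: "nat \<Rightarrow> (pt \<Rightarrow> real) \<Rightarrow> pt \<Rightarrow> real" where
  "pd i g x = deriv (\<lambda>t. g (x(i := x i + t))) 0"

fun ipd :: "nat list \<Rightarrow> (pt \<Rightarrow> real) \<Rightarrow> pt \<Rightarrow> real" where
  "ipd [] g = g"
| "ipd (i # is) g = pd i (ipd is g)"

definition smooth_on :: "nat \<Rightarrow> pt set \<Rightarrow> (pt \<Rightarrow> real) \<Rightarrow> bool" where
  "smooth_on n U g \<longleftrightarrow>
     (\<forall>is. set is \<subseteq> {..<n} \<longrightarrow>
        continuous_on U (ipd is g) \<and>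
        (\<forall>i<n. \<forall>u\<in>U. (\<lambda>t. ipd is g (u(i := u i + t))) differentiable (at 0)))"

definition smooth_map :: "nat \<Rightarrow> pt set \<Rightarrow> nat \<Rightarrow> pt set \<Rightarrow> (pt \<Rightarrow> pt) \<Rightarrow> bool" where
  "smooth_map n U m V f \<longleftrightarrow> f ` U \<subseteq> V \<and> (\<forall>j<m. smooth_on n U (\<lambda>u. f u j))"

definition diff0 :: "nat \<Rightarrow> nat \<Rightarrow> (pt \<Rightarrow> pt) \<Rightarrow> pt \<Rightarrow> pt" where
  "diff0 n m f v = (\<lambda>j. if j < m then (\<Sum>i<n. pd i (\<lambda>u. f u j) 0 * v i) else 0)"

text \<open>plot n U p: p restricted to U is a plot U -> X (U open in R^n).
  Functions are total in HOL, so only the values on U matter (extensionality).\<close>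

definition diffeology :: "'a set \<Rightarrow> (nat \<Rightarrow> pt set \<Rightarrow> (pt \<Rightarrow> 'a) \<Rightarrow> bool) \<Rightarrow> bool" where
  "diffeology X plot \<longleftrightarrow>
     (\<forall>n U p. plot n U p \<longrightarrow> openR n U \<and> p ` U \<subseteq> X)
   \<and> (\<forall>n U p q. plot n U p \<and> (\<forall>u\<in>U. q u = p u) \<longrightarrow> plot n U q)
   \<and> (\<forall>n U x. openR n U \<and> x \<in> X \<longrightarrow> plot n U (\<lambda>_. x))
   \<and> (\<forall>n U p m V f. plot n U p \<and> openR m V \<and> smooth_map m V n U f \<longrightarrow> plot m V (p \<circ> f))
   \<and> (\<forall>n U p. openR n U \<and> p ` U \<subseteq> X \<and>
        (\<forall>u\<in>U. \<exists>W. openR n W \<and> u \<in> W \<and> W \<subseteq> U \<and> plot n W p) \<longrightarrow> plot n U p)"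

type_synonym 'a gobj = "nat \<times> pt set \<times> (pt \<Rightarrow> 'a)"

definition Gobj :: "(nat \<Rightarrow> pt set \<Rightarrow> (pt \<Rightarrow> 'a) \<Rightarrow> bool) \<Rightarrow> 'a \<Rightarrow> 'a gobj set" where
  "Gobj plot x = {(n, U, p). openR n U \<and> connected U \<and> 0 \<in> U \<and> plot n U p \<and> p 0 = x}"

definition dimo :: "'a gobj \<Rightarrow> nat" where "dimo P = fst P"
definition domo :: "'a gobj \<Rightarrow> pt set" where "domo P = fst (snd P)"
definition plto :: "'a gobj \<Rightarrow> pt \<Rightarrow> 'a" where "plto P = snd (snd P)"

text \<open>(W, f) represents a morphism P -> Q (a germ at 0 of f).\<close>
definition is_mor :: "'a gobj \<Rightarrow> 'a gobj \<Rightarrow> pt set \<Rightarrow> (pt \<Rightarrow> pt) \<Rightarrow> bool" where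
  "is_mor P Q W f \<longleftrightarrow> openR (dimo P) W \<and> 0 \<in> W \<and> W \<subseteq> domo P \<and>
     smooth_map (dimo P) W (dimo Q) (domo Q) f \<and> f 0 = 0 \<and>
     (\<forall>w\<in>W. plto P w = plto Q (f w))"

definition germ_eq :: "nat \<Rightarrow> pt set \<Rightarrow> (pt \<Rightarrow> 'b) \<Rightarrow> pt set \<Rightarrow> (pt \<Rightarrow> 'b) \<Rightarrow> bool" where
  "germ_eq n W f W' f' \<longleftrightarrow> (\<exists>W''. openR n W'' \<and> 0 \<in> W'' \<and> W'' \<subseteq> W \<inter> W' \<and> (\<forall>w\<in>W''. f w = f' w))"

definition Gmor :: "(nat \<Rightarrow> pt set \<Rightarrow> (pt \<Rightarrow> 'a) \<Rightarrow> bool) \<Rightarrow> 'a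
    \<Rightarrow> 'a gobj \<Rightarrow> 'a gobj \<Rightarrow> pt set \<Rightarrow> (pt \<Rightarrow> pt) \<Rightarrow> bool" where
  "Gmor plot x P Q W f \<longleftrightarrow> P \<in> Gobj plot x \<and> Q \<in> Gobj plot x \<and> is_mor P Q W f"

text \<open>A subcategory: a set of objects Gob and a set of morphisms M (a set of germs,
  given by the predicate M on representatives, closed under change of representative),
  containing identities and closed under composition.\<close>
definition subcategory :: "(nat \<Rightarrow> pt set \<Rightarrow> (pt \<Rightarrow> 'a) \<Rightarrow> bool) \<Rightarrow> 'a \<Rightarrow> 'a gobj set
    \<Rightarrow> ('a gobj \<Rightarrow> 'a gobj \<Rightarrow> pt set \<Rightarrow> (pt \<Rightarrow> pt) \<Rightarrow> bool) \<Rightarrow> bool" where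
  "subcategory plot x Gob M \<longleftrightarrow>
     Gob \<subseteq> Gobj plot x
   \<and> (\<forall>P Q W f. M P Q W f \<longrightarrow> P \<in> Gob \<and> Q \<in> Gob \<and> is_mor P Q W f)
   \<and> (\<forall>P Q W f W' f'. M P Q W f \<and> is_mor P Q W' f' \<and> germ_eq (dimo P) W f W' f' \<longrightarrow> M P Q W' f')
   \<and> (\<forall>P\<in>Gob. M P P (domo P) id)
   \<and> (\<forall>P Q R W f W' g. M P Q W f \<and> M Q R W' g \<longrightarrow> M P R (W \<inter> f -` W') (g \<circ> f))"

definition local_generating_set :: "(nat \<Rightarrow> pt set \<Rightarrow> (pt \<Rightarrow> 'a) \<Rightarrow> bool) \<Rightarrow> 'a \<Rightarrow> 'a gobj set \<Rightarrow> bool" where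
  "local_generating_set plot x Gob \<longleftrightarrow>
     Gob \<subseteq> Gobj plot x \<and> (\<forall>P\<in>Gobj plot x. \<exists>Q\<in>Gob. \<exists>W f. Gmor plot x P Q W f)"

definition local_generating_category :: "(nat \<Rightarrow> pt set \<Rightarrow> (pt \<Rightarrow> 'a) \<Rightarrow> bool) \<Rightarrow> 'a \<Rightarrow> 'a gobj set
    \<Rightarrow> ('a gobj \<Rightarrow> 'a gobj \<Rightarrow> pt set \<Rightarrow> (pt \<Rightarrow> pt) \<Rightarrow> bool) \<Rightarrow> bool" where
  "local_generating_category plot x Gob M \<longleftrightarrow>
     subcategory plot x Gob M \<and> local_generating_set plot x Gob"

text \<open>Comma category P/G: objects (Q,[f]) with Q in G and [f] : P -> Q in G(X,x);
  arrows (Q,[f]) -> (Q',[f']) are [g] in G with [g] o [f] = [f'].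
  Objects are taken as representatives; representatives of one germ are
  connected through the identity, so connectedness is unaffected.\<close>
definition comma_obj :: "(nat \<Rightarrow> pt set \<Rightarrow> (pt \<Rightarrow> 'a) \<Rightarrow> bool) \<Rightarrow> 'a \<Rightarrow> 'a gobj set \<Rightarrow> 'a gobj
    \<Rightarrow> ('a gobj \<times> pt set \<times> (pt \<Rightarrow> pt)) set" where
  "comma_obj plot x Gob P = {(Q, W, f). Q \<in> Gob \<and> Gmor plot x P Q W f}"

definition comma_arr :: "(nat \<Rightarrow> pt set \<Rightarrow> (pt \<Rightarrow> 'a) \<Rightarrow> bool) \<Rightarrow> 'a \<Rightarrow> 'a gobj set
    \<Rightarrow> ('a gobj \<Rightarrow> 'a gobj \<Rightarrow> pt set \<Rightarrow> (pt \<Rightarrow> pt) \<Rightarrow> bool) \<Rightarrow> 'a gobj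
    \<Rightarrow> (('a gobj \<times> pt set \<times> (pt \<Rightarrow> pt)) \<times> ('a gobj \<times> pt set \<times> (pt \<Rightarrow> pt))) set" where
  "comma_arr plot x Gob M P = {((Q, W, f), (Q', W', f')).
      (Q, W, f) \<in> comma_obj plot x Gob P \<and> (Q', W', f') \<in> comma_obj plot x Gob P \<and>
      (\<exists>Wg g. M Q Q' Wg g \<and> germ_eq (dimo P) (W \<inter> f -` Wg) (g \<circ> f) W' f')}"

definition final_subcategory :: "(nat \<Rightarrow> pt set \<Rightarrow> (pt \<Rightarrow> 'a) \<Rightarrow> bool) \<Rightarrow> 'a \<Rightarrow> 'a gobj set
    \<Rightarrow> ('a gobj \<Rightarrow> 'a gobj \<Rightarrow> pt set \<Rightarrow> (pt \<Rightarrow> pt) \<Rightarrow> bool) \<Rightarrow> bool" where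
  "final_subcategory plot x Gob M \<longleftrightarrow>
     (\<forall>P\<in>Gobj plot x.
        comma_obj plot x Gob P \<noteq> {} \<and>
        (\<forall>a\<in>comma_obj plot x Gob P. \<forall>b\<in>comma_obj plot x Gob P.
           (a, b) \<in> (comma_arr plot x Gob M P \<union> (comma_arr plot x Gob M P)\<inverse>)\<^sup>*))"

text \<open>For objects I and morphisms M, the colimit of P |-> T_0(dom P) = R^(dim P),
  [f] |-> f_* : the direct sum of the R^(dim P) modulo the subspace spanned by
  inj Q (f_* v) - inj P v.\<close>

definition inj_ds :: "'a gobj \<Rightarrow> pt \<Rightarrow> 'a gobj \<Rightarrow> pt" where
  "inj_ds P v = (\<lambda>Q. if Q = P then v else 0)"

definition dsum :: "'a gobj set \<Rightarrow> ('a gobj \<Rightarrow> pt) set" where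
  "dsum I = {s. finite {P. s P \<noteq> 0} \<and> (\<forall>P. s P \<noteq> 0 \<longrightarrow> P \<in> I) \<and> (\<forall>P\<in>I. s P \<in> euclid (dimo P))}"

definition rels :: "('a gobj \<Rightarrow> 'a gobj \<Rightarrow> pt set \<Rightarrow> (pt \<Rightarrow> pt) \<Rightarrow> bool) \<Rightarrow> ('a gobj \<Rightarrow> pt) set" where
  "rels M = span {inj_ds Q (diff0 (dimo P) (dimo Q) f v) - inj_ds P v | P Q W f v.
                    M P Q W f \<and> v \<in> euclid (dimo P)}"

definition coset :: "'b::ab_group_add \<Rightarrow> 'b set \<Rightarrow> 'b set" where
  "coset s R = {s + r | r. r \<in> R}"

definition colim :: "'a gobj set \<Rightarrow> ('a gobj \<Rightarrow> 'a gobj \<Rightarrow> pt set \<Rightarrow> (pt \<Rightarrow> pt) \<Rightarrow> bool)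
    \<Rightarrow> ('a gobj \<Rightarrow> pt) set set" where
  "colim I M = (\<lambda>s. coset s (rels M)) ` dsum I"

definition colim_in :: "('a gobj \<Rightarrow> 'a gobj \<Rightarrow> pt set \<Rightarrow> (pt \<Rightarrow> pt) \<Rightarrow> bool) \<Rightarrow> 'a gobj \<Rightarrow> pt
    \<Rightarrow> ('a gobj \<Rightarrow> pt) set" where
  "colim_in M P v = coset (inj_ds P v) (rels M)"

definition qplus :: "'b::real_vector set \<Rightarrow> 'b set \<Rightarrow> 'b set \<Rightarrow> 'b set" where
  "qplus R C D = coset ((SOME c. c \<in> C) + (SOME d. d \<in> D)) R"

definition qscale :: "'b::real_vector set \<Rightarrow> real \<Rightarrow> 'b set \<Rightarrow> 'b set" where
  "qscale R a C = coset (a *\<^sub>R (SOME c. c \<in> C)) R"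

definition qlinear :: "'b::real_vector set \<Rightarrow> 'c::real_vector set \<Rightarrow> 'b set set
    \<Rightarrow> ('b set \<Rightarrow> 'c set) \<Rightarrow> bool" where
  "qlinear R S A \<phi> \<longleftrightarrow>
     (\<forall>C\<in>A. \<forall>D\<in>A. \<phi> (qplus R C D) = qplus S (\<phi> C) (\<phi> D)) \<and>
     (\<forall>a. \<forall>C\<in>A. \<phi> (qscale R a C) = qscale S a (\<phi> C))"

definition tangent_space :: "(nat \<Rightarrow> pt set \<Rightarrow> (pt \<Rightarrow> 'a) \<Rightarrow> bool) \<Rightarrow> 'a \<Rightarrow> ('a gobj \<Rightarrow> pt) set set" where
  "tangent_space plot x = colim (Gobj plot x) (Gmor plot x)"

end

theory Submission
  imports Defs
begin


definition nbox :: "nat \<Rightarrow> pt \<Rightarrow> real \<Rightarrow> pt set" where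
  "nbox n c d = {y. \<forall>j<n. \<bar>y j - c j\<bar> < d}"

lemma open_nbox: "open (nbox n c d)"
proof -
  have "nbox n c d = {f. \<forall>i\<in>{..<n}. f (id i) \<in> ball (c i) d}"
    by (auto simp: nbox_def dist_real_def ball_def abs_minus_commute)
  then show ?thesis using product_topology_basis'[of "{..<n}" "\<lambda>i. ball (c i) d" id] by simp
qed

lemma nbox_center: "d > 0 \<Longrightarrow> c \<in> nbox n c d"
  by (simp add: nbox_def)

lemma open_contains_nbox:
  assumes "open S" "c \<in> S" "c \<in> euclid n"
  shows "\<exists>d>0. nbox n c d \<inter> euclid n \<subseteq> S"
proof -
  have "openin (product_topology (\<lambda>i. euclidean) UNIV) S" using assms(1) by (simp add: open_fun_def)
  from product_topology_open_contains_basis[OF this assms(2)]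
  obtain X where X: "c \<in> (\<Pi>\<^sub>E i\<in>UNIV. X i)" "\<And>i. open (X i)" "finite {i. X i \<noteq> UNIV}"
     "(\<Pi>\<^sub>E i\<in>UNIV. X i) \<subseteq> S" by auto
  define I where "I = {i. X i \<noteq> UNIV}"
  have "\<forall>i\<in>I. \<exists>e>0. ball (c i) e \<subseteq> X i"
    using X(1,2) by (meson PiE_E UNIV_I open_contains_ball)
  then obtain dd where dd: "\<forall>i\<in>I. dd i > 0 \<and> ball (c i) (dd i) \<subseteq> X i" by metis
  define d where "d = Min (insert 1 (dd ` I))"
  have fin: "finite (insert 1 (dd ` I))" using X(3) I_def by simp
  have dpos: "d > 0" unfolding d_def using fin dd by (subst Min_gr_iff) auto
  have dle: "\<And>i. i \<in> I \<Longrightarrow> d \<le> dd i" unfolding d_def using fin by simp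
  have "nbox n c d \<inter> euclid n \<subseteq> (\<Pi>\<^sub>E i\<in>UNIV. X i)"
  proof
    fix y assume y: "y \<in> nbox n c d \<inter> euclid n"
    have "y i \<in> X i" for i
    proof (cases "i \<in> I")
      case False then show ?thesis by (simp add: I_def)
    next
      case True
      show ?thesis
      proof (cases "i < n")
        case True
        then have "\<bar>y i - c i\<bar> < dd i" using y dle[OF \<open>i\<in>I\<close>] by (auto simp: nbox_def)
        then have "y i \<in> ball (c i) (dd i)" by (simp add: dist_real_def)
        then show ?thesis using dd \<open>i\<in>I\<close> by blast
      next
        case False
        then have "y i = c i" using y assms(3) by (auto simp: euclid_def)
        then show ?thesis using X(1) by auto
      qed
    qed
    then show "y \<in> (\<Pi>\<^sub>E i\<in>UNIV. X i)" by auto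
  qed
  then show ?thesis using X(4) dpos by blast
qed

lemma openR_iff:
  "openR n S \<longleftrightarrow> S \<subseteq> euclid n \<and> (\<forall>c\<in>S. \<exists>d>0. nbox n c d \<inter> euclid n \<subseteq> S)"
proof
  assume "openR n S"
  then obtain T where T: "open T" "S = euclid n \<inter> T" "S \<subseteq> euclid n"
    by (auto simp: openR_def openin_open)
  show "S \<subseteq> euclid n \<and> (\<forall>c\<in>S. \<exists>d>0. nbox n c d \<inter> euclid n \<subseteq> S)"
  proof (intro conjI ballI)
    fix c assume "c \<in> S"
    then obtain d where "d>0" "nbox n c d \<inter> euclid n \<subseteq> T" using open_contains_nbox[OF T(1)] T by blast
    then show "\<exists>d>0. nbox n c d \<inter> euclid n \<subseteq> S" using T by blast
  qed (use T in auto)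
next
  assume a: "S \<subseteq> euclid n \<and> (\<forall>c\<in>S. \<exists>d>0. nbox n c d \<inter> euclid n \<subseteq> S)"
  then obtain d where d: "\<forall>c\<in>S. d c > 0 \<and> nbox n c (d c) \<inter> euclid n \<subseteq> S" by metis
  define T where "T = (\<Union>c\<in>S. nbox n c (d c))"
  have "open T" unfolding T_def using open_nbox by blast
  moreover have "S = euclid n \<inter> T" unfolding T_def using a d nbox_center by blast
  ultimately show "openR n S" using a by (auto simp: openR_def openin_open)
qed

lemma continuous_on_iff_nbox:
  fixes h :: "pt \<Rightarrow> 'b::metric_space"
  assumes "S \<subseteq> euclid n"
  shows "continuous_on S h \<longleftrightarrow> (\<forall>c\<in>S. \<forall>e>0. \<exists>d>0. \<forall>y\<in>S. y \<in> nbox n c d \<longrightarrow> dist (h y) (h c) < e)"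
proof
  assume c: "continuous_on S h"
  show "\<forall>c\<in>S. \<forall>e>0. \<exists>d>0. \<forall>y\<in>S. y \<in> nbox n c d \<longrightarrow> dist (h y) (h c) < e"
  proof (intro ballI allI impI)
    fix c e assume "c \<in> S" "(e::real) > 0"
    then obtain A where A: "open A" "c \<in> A" "\<forall>y\<in>S. y \<in> A \<longrightarrow> h y \<in> ball (h c) e"
      using c unfolding continuous_on_topological by (metis centre_in_ball open_ball)
    obtain d where "d > 0" "nbox n c d \<inter> euclid n \<subseteq> A"
      using open_contains_nbox[OF A(1,2)] assms \<open>c \<in> S\<close> by blast
    then show "\<exists>d>0. \<forall>y\<in>S. y \<in> nbox n c d \<longrightarrow> dist (h y) (h c) < e"
      using A(3) assms by (metis IntI dist_commute mem_ball subsetD)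
  qed
next
  assume a: "\<forall>c\<in>S. \<forall>e>0. \<exists>d>0. \<forall>y\<in>S. y \<in> nbox n c d \<longrightarrow> dist (h y) (h c) < e"
  show "continuous_on S h" unfolding continuous_on_topological
  proof (intro ballI allI impI)
    fix c B assume "c \<in> S" "open B" "h c \<in> B"
    then obtain e where "e > 0" "ball (h c) e \<subseteq> B" using open_contains_ball by blast
    then obtain d where "d > 0" "\<forall>y\<in>S. y \<in> nbox n c d \<longrightarrow> dist (h y) (h c) < e"
      using a \<open>c \<in> S\<close> by blast
    then show "\<exists>A. open A \<and> c \<in> A \<and> (\<forall>y\<in>S. y \<in> A \<longrightarrow> h y \<in> B)"
      using \<open>ball (h c) e \<subseteq> B\<close> open_nbox nbox_center
      by (metis dist_commute mem_ball subsetD)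
  qed
qed


lemma euclid_upd: "u \<in> euclid n \<Longrightarrow> i < n \<Longrightarrow> u(i := a) \<in> euclid n"
  by (auto simp: euclid_def)

lemma nbox_mono: "y \<in> nbox n c d \<Longrightarrow> d \<le> e \<Longrightarrow> y \<in> nbox n c e"
  by (auto simp: nbox_def)

lemma line_in_nbox: "\<bar>t\<bar> < d \<Longrightarrow> u(i := u i + t) \<in> nbox n u d"
  by (auto simp: nbox_def)

lemma ev_line_in:
  assumes "openR n U" "u \<in> U" "i < n"
  shows "eventually (\<lambda>t. u(i := u i + t) \<in> U) (nhds 0)"
proof -
  obtain d where d: "d > 0" "nbox n u d \<inter> euclid n \<subseteq> U" "U \<subseteq> euclid n"
    using assms openR_iff by metis
  have "u(i := u i + t) \<in> U" if "dist t 0 < d" for t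
  proof -
    have "\<bar>t\<bar> < d" using that by simp
    then have "u(i := u i + t) \<in> nbox n u d" by (rule line_in_nbox)
    moreover have "u(i := u i + t) \<in> euclid n" using euclid_upd assms d by blast
    ultimately show ?thesis using d by blast
  qed
  then show ?thesis unfolding eventually_nhds_metric using d by blast
qed

lemma pd_cong:
  assumes "openR n U" "u \<in> U" "i < n" "\<forall>y\<in>U. h y = h' y"
  shows "pd i h u = pd i h' u"
proof -
  have "eventually (\<lambda>t. h (u(i := u i + t)) = h' (u(i := u i + t))) (nhds 0)"
    using ev_line_in[OF assms(1-3)] by (rule eventually_mono) (simp add: assms(4))
  then show ?thesis unfolding pd_def by (intro deriv_cong_ev) simp_all
qed

lemma diffable_cong:
  fixes h h' :: "pt \<Rightarrow> real"
  assumes "openR n U" "u \<in> U" "i < n" "\<forall>y\<in>U. h y = h' y"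
    "(\<lambda>t. h (u(i := u i + t))) differentiable at 0"
  shows "(\<lambda>t. h' (u(i := u i + t))) differentiable at 0"
proof -
  have "eventually (\<lambda>t. h (u(i := u i + t)) = h' (u(i := u i + t))) (nhds 0)"
    using ev_line_in[OF assms(1-3)] by (rule eventually_mono) (simp add: assms(4))
  moreover obtain D where "((\<lambda>t. h (u(i := u i + t))) has_real_derivative D) (at 0)"
    using assms(5) unfolding real_differentiable_def by blast
  ultimately have "((\<lambda>t. h' (u(i := u i + t))) has_real_derivative D) (at 0)"
    using DERIV_cong_ev[of 0 0 "\<lambda>t. h (u(i := u i + t))" "\<lambda>t. h' (u(i := u i + t))" D D] by simp
  then show ?thesis unfolding real_differentiable_def by blast
qed

lemma diffable_DERIV:
  assumes "(\<lambda>t. h (u(i := u i + t))) differentiable at 0"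
  shows "((\<lambda>t. h (u(i := u i + t))) has_real_derivative pd i h u) (at 0)"
  using assms unfolding pd_def by (simp add: DERIV_deriv_iff_real_differentiable)

lemma line_DERIV_shift:
  assumes "(\<lambda>t. g (y(k := y k + t))) differentiable at 0" "y = w(k := a + s0)"
  shows "((\<lambda>s. g (w(k := a + s))) has_real_derivative pd k g y) (at s0)"
proof -
  have "((\<lambda>t. g (y(k := y k + t))) has_real_derivative pd k g y) (at 0)"
    by (rule diffable_DERIV[OF assms(1)])
  moreover have "(\<lambda>t. g (y(k := y k + t))) = (\<lambda>t. g (w(k := a + (t + s0))))"
    unfolding assms(2) by (simp add: add_ac)
  ultimately have "((\<lambda>t. g (w(k := a + (t + s0)))) has_real_derivative pd k g y) (at 0)" by simp
  then show ?thesis using DERIV_shift[of "\<lambda>s. g (w(k := a + s))" "pd k g y" 0 s0] by simp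
qed

lemma mvt_sym:
  fixes \<phi> \<phi>' :: "real \<Rightarrow> real"
  assumes "\<And>s. \<bar>s\<bar> \<le> \<bar>\<delta>\<bar> \<Longrightarrow> (\<phi> has_real_derivative \<phi>' s) (at s)"
  shows "\<exists>\<xi>. \<bar>\<xi>\<bar> \<le> \<bar>\<delta>\<bar> \<and> \<phi> \<delta> - \<phi> 0 = \<delta> * \<phi>' \<xi>"
proof (cases "\<delta> = 0")
  case True then show ?thesis by auto
next
  case False
  have cont: "continuous_on {a..b} \<phi>" if "\<bar>a\<bar> \<le> \<bar>\<delta>\<bar>" "\<bar>b\<bar> \<le> \<bar>\<delta>\<bar>" for a b
  proof (rule continuous_at_imp_continuous_on, intro ballI)
    fix s assume "s \<in> {a..b}"
    then have "\<bar>s\<bar> \<le> \<bar>\<delta>\<bar>" using that by auto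
    then show "isCont \<phi> s" using assms DERIV_isCont by blast
  qed
  show ?thesis
  proof (cases "\<delta> > 0")
    case True
    have "\<exists>l z. 0 < z \<and> z < \<delta> \<and> DERIV \<phi> z :> l \<and> \<phi> \<delta> - \<phi> 0 = (\<delta> - 0) * l"
    proof (rule MVT)
      show "continuous_on {0..\<delta>} \<phi>" using cont[of 0 \<delta>] by simp
      fix s assume "0 < s" "s < \<delta>"
      then have "\<bar>s\<bar> \<le> \<bar>\<delta>\<bar>" by auto
      then show "\<phi> differentiable at s" using assms real_differentiable_def by blast
    qed (use True in simp)
    then obtain l z where "0 < z" "z < \<delta>" "DERIV \<phi> z :> l" "\<phi> \<delta> - \<phi> 0 = \<delta> * l" by auto
    moreover have "DERIV \<phi> z :> \<phi>' z" using assms \<open>0<z\<close> \<open>z<\<delta>\<close> by auto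
    ultimately have "l = \<phi>' z" using DERIV_unique by blast
    then show ?thesis using \<open>\<phi> \<delta> - \<phi> 0 = \<delta> * l\<close> \<open>0<z\<close> \<open>z<\<delta>\<close> by (intro exI[of _ z]) auto
  next
    case False
    then have neg: "\<delta> < 0" using \<open>\<delta> \<noteq> 0\<close> by auto
    have "\<exists>l z. \<delta> < z \<and> z < 0 \<and> DERIV \<phi> z :> l \<and> \<phi> 0 - \<phi> \<delta> = (0 - \<delta>) * l"
    proof (rule MVT)
      show "continuous_on {\<delta>..0} \<phi>" using cont[of \<delta> 0] by simp
      fix s assume "\<delta> < s" "s < 0"
      then have "\<bar>s\<bar> \<le> \<bar>\<delta>\<bar>" by auto
      then show "\<phi> differentiable at s" using assms real_differentiable_def by blast
    qed (use neg in simp)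
    then obtain l z where "\<delta> < z" "z < 0" "DERIV \<phi> z :> l" "\<phi> 0 - \<phi> \<delta> = (0 - \<delta>) * l" by auto
    moreover have "DERIV \<phi> z :> \<phi>' z" using assms \<open>\<delta><z\<close> \<open>z<0\<close> by auto
    ultimately have "l = \<phi>' z" using DERIV_unique by blast
    then have "\<phi> \<delta> - \<phi> 0 = \<delta> * \<phi>' z" using \<open>\<phi> 0 - \<phi> \<delta> = (0 - \<delta>) * l\<close> by (simp add: algebra_simps)
    moreover have "\<bar>z\<bar> \<le> \<bar>\<delta>\<bar>" using \<open>\<delta> < z\<close> \<open>z < 0\<close> by auto
    ultimately show ?thesis by blast
  qed
qed


lemma chain_line:
  fixes g :: "pt \<Rightarrow> real" and \<gamma> :: "real \<Rightarrow> pt"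
  assumes U: "openR n U" and c: "c \<in> U"
    and gd: "\<forall>j<n. \<forall>y\<in>U. (\<lambda>t. g (y(j := y j + t))) differentiable at 0"
    and gc: "\<forall>j<n. continuous_on U (pd j g)"
    and gam: "\<forall>j<n. ((\<lambda>t. \<gamma> t j) has_real_derivative D j) (at 0)"
    and g0: "\<gamma> 0 = c"
    and ev: "eventually (\<lambda>t. \<gamma> t \<in> U) (at 0)"
  shows "((\<lambda>t. g (\<gamma> t)) has_real_derivative (\<Sum>j<n. pd j g c * D j)) (at 0)"
proof -
  obtain d where d: "d > 0" "nbox n c d \<inter> euclid n \<subseteq> U" and Ue: "U \<subseteq> euclid n"
    using U c openR_iff by metis
  have ce: "c \<in> euclid n" using c Ue by auto
  have gcont: "((\<lambda>t. \<gamma> t j) \<longlongrightarrow> c j) (at 0)" if "j < n" for j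
  proof -
    have "isCont (\<lambda>t. \<gamma> t j) 0" using gam that DERIV_isCont by blast
    then show ?thesis using g0 by (simp add: isCont_def)
  qed
  have evclose: "eventually (\<lambda>t. \<forall>j<n. \<bar>\<gamma> t j - c j\<bar> < e) (at 0)" if "e > 0" for e
  proof -
    have "\<forall>j\<in>{..<n}. eventually (\<lambda>t. \<bar>\<gamma> t j - c j\<bar> < e) (at 0)"
    proof
      fix j assume "j \<in> {..<n}"
      then have "((\<lambda>t. \<gamma> t j) \<longlongrightarrow> c j) (at 0)" using gcont by auto
      then have "eventually (\<lambda>t. dist (\<gamma> t j) (c j) < e) (at 0)" using \<open>e>0\<close> tendstoD by blast
      then show "eventually (\<lambda>t. \<bar>\<gamma> t j - c j\<bar> < e) (at 0)" by (simp add: dist_real_def)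
    qed
    then have "eventually (\<lambda>t. \<forall>j\<in>{..<n}. \<bar>\<gamma> t j - c j\<bar> < e) (at 0)"
      by (rule eventually_ball_finite[OF finite_lessThan])
    then show ?thesis by (rule eventually_mono) simp
  qed
  define good where "good t \<longleftrightarrow> \<gamma> t \<in> U \<and> (\<forall>j<n. \<bar>\<gamma> t j - c j\<bar> < d)" for t
  have evgood: "eventually good (at 0)"
    using eventually_conj[OF ev evclose[OF d(1)]] unfolding good_def by simp
  define z where "z k t = (\<lambda>j. if j < k then c j else if j < n then \<gamma> t j else 0)" for k t
  have zE: "z k t \<in> euclid n" for k t using ce by (auto simp: z_def euclid_def)
  have z0: "z 0 t = \<gamma> t" if "good t" for t
  proof -
    have "\<gamma> t \<in> euclid n" using that Ue by (auto simp: good_def)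
    then show ?thesis by (auto simp: z_def euclid_def fun_eq_iff)
  qed
  have zn: "z n t = c" for t using ce by (auto simp: z_def euclid_def fun_eq_iff)
  define Q where "Q k t p \<longleftrightarrow> p \<in> U \<and> (\<forall>e. (\<forall>j<n. \<bar>\<gamma> t j - c j\<bar> < e) \<longrightarrow> p \<in> nbox n c e)
      \<and> g (z k t) - g (z (Suc k) t) = (\<gamma> t k - c k) * pd k g p" for k t p
  have key: "\<exists>p. Q k t p" if k: "k < n" and gt: "good t" for k t
  proof -
    define w where "w = z (Suc k) t"
    define \<delta> where "\<delta> = \<gamma> t k - c k"
    have wk: "w k = c k" by (simp add: w_def z_def)
    have zk: "z k t = w(k := c k + \<delta>)" using k by (auto simp: w_def z_def \<delta>_def fun_eq_iff)
    have zs: "z (Suc k) t = w(k := c k + 0)"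
    proof -
      have "w(k := c k + 0) = w(k := w k)" using wk by simp
      also have "\<dots> = w" by simp
      finally show ?thesis unfolding w_def[symmetric] by simp
    qed
    have nb: "w(k := c k + s) \<in> nbox n c e" if "\<bar>s\<bar> \<le> \<bar>\<delta>\<bar>" "\<forall>j<n. \<bar>\<gamma> t j - c j\<bar> < e" for s e
      unfolding nbox_def mem_Collect_eq
    proof (intro allI impI)
      fix j assume "j < n"
      show "\<bar>(w(k := c k + s)) j - c j\<bar> < e"
      proof (cases "j = k")
        case True then show ?thesis using that \<open>j<n\<close> \<delta>_def by auto
      next
        case False
        then show ?thesis using that(2) \<open>j<n\<close> by (auto simp: w_def z_def)
      qed
    qed
    have inU: "w(k := c k + s) \<in> U" if "\<bar>s\<bar> \<le> \<bar>\<delta>\<bar>" for s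
    proof -
      have "w(k := c k + s) \<in> nbox n c d" using nb that gt by (auto simp: good_def)
      moreover have "w(k := c k + s) \<in> euclid n" using euclid_upd zE k by (simp add: w_def)
      ultimately show ?thesis using d by blast
    qed
    have der: "((\<lambda>s. g (w(k := c k + s))) has_real_derivative pd k g (w(k := c k + s))) (at s)"
      if "\<bar>s\<bar> \<le> \<bar>\<delta>\<bar>" for s
    proof (rule line_DERIV_shift)
      show "(\<lambda>t. g ((w(k := c k + s))(k := (w(k := c k + s)) k + t))) differentiable at 0"
        using gd k inU[OF that] by blast
    qed (rule refl)
    obtain \<xi> where xi: "\<bar>\<xi>\<bar> \<le> \<bar>\<delta>\<bar>"
      "g (w(k := c k + \<delta>)) - g (w(k := c k + 0)) = \<delta> * pd k g (w(k := c k + \<xi>))"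
      using mvt_sym[of \<delta> "\<lambda>s. g (w(k := c k + s))" "\<lambda>s. pd k g (w(k := c k + s))"] der by blast
    have "Q k t (w(k := c k + \<xi>))"
      unfolding Q_def using inU[OF xi(1)] nb[OF xi(1)] xi(2) zk zs \<delta>_def by auto
    then show ?thesis by blast
  qed
  define P where "P k t = (SOME p. Q k t p)" for k t
  have PQ: "Q k t (P k t)" if "k < n" "good t" for k t
    unfolding P_def by (rule someI_ex[of "Q k t"]) (rule key[OF that])
  have limP: "((\<lambda>t. pd k g (P k t)) \<longlongrightarrow> pd k g c) (at 0)" if k: "k < n" for k
  proof (rule tendstoI)
    fix \<epsilon> :: real assume "\<epsilon> > 0"
    have "continuous_on U (pd k g)" using gc k by blast
    then obtain e where e: "e > 0" "\<forall>y\<in>U. y \<in> nbox n c e \<longrightarrow> dist (pd k g y) (pd k g c) < \<epsilon>"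
      using continuous_on_iff_nbox[OF Ue] c \<open>\<epsilon>>0\<close> by metis
    show "eventually (\<lambda>t. dist (pd k g (P k t)) (pd k g c) < \<epsilon>) (at 0)"
      using eventually_conj[OF evgood evclose[OF e(1)]]
    proof (rule eventually_mono)
      fix t assume "good t \<and> (\<forall>j<n. \<bar>\<gamma> t j - c j\<bar> < e)"
      then have "Q k t (P k t)" "\<forall>j<n. \<bar>\<gamma> t j - c j\<bar> < e" using PQ k by auto
      then have "P k t \<in> U" "P k t \<in> nbox n c e" unfolding Q_def by auto
      then show "dist (pd k g (P k t)) (pd k g c) < \<epsilon>" using e by blast
    qed
  qed
  have limq: "((\<lambda>t. (\<gamma> t k - c k) / (t - 0)) \<longlongrightarrow> D k) (at 0)" if "k < n" for k
    using gam that g0 unfolding has_field_derivative_iff by auto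
  have lim: "((\<lambda>t. \<Sum>k<n. pd k g (P k t) * ((\<gamma> t k - c k) / (t - 0))) \<longlongrightarrow> (\<Sum>k<n. pd k g c * D k)) (at 0)"
  proof (rule tendsto_sum)
    fix k assume "k \<in> {..<n}"
    then have k: "k < n" by simp
    show "((\<lambda>t. pd k g (P k t) * ((\<gamma> t k - c k) / (t - 0))) \<longlongrightarrow> pd k g c * D k) (at 0)"
      by (rule tendsto_mult[OF limP[OF k] limq[OF k]])
  qed
  have eq: "(\<Sum>k<n. pd k g (P k t) * ((\<gamma> t k - c k) / (t - 0))) = (g (\<gamma> t) - g (\<gamma> 0)) / (t - 0)"
    if gt: "good t" for t
  proof -
    have "g (\<gamma> t) - g (\<gamma> 0) = g (z 0 t) - g (z n t)" using z0[OF gt] zn g0 by simp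
    also have "\<dots> = (\<Sum>k<n. g (z k t) - g (z (Suc k) t))"
      by (rule sum_lessThan_telescope'[of "\<lambda>k. g (z k t)" n, symmetric])
    also have "\<dots> = (\<Sum>k<n. (\<gamma> t k - c k) * pd k g (P k t))"
    proof (rule sum.cong[OF refl])
      fix k assume "k \<in> {..<n}"
      then have "Q k t (P k t)" using PQ gt by simp
      then show "g (z k t) - g (z (Suc k) t) = (\<gamma> t k - c k) * pd k g (P k t)" unfolding Q_def by blast
    qed
    finally have "(g (\<gamma> t) - g (\<gamma> 0)) / (t - 0) = (\<Sum>k<n. (\<gamma> t k - c k) * pd k g (P k t)) / (t - 0)" by simp
    also have "\<dots> = (\<Sum>k<n. pd k g (P k t) * ((\<gamma> t k - c k) / (t - 0)))"
      unfolding sum_divide_distrib by (rule sum.cong) (simp_all add: field_simps)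
    finally show ?thesis by simp
  qed
  have "eventually (\<lambda>t. (\<Sum>k<n. pd k g (P k t) * ((\<gamma> t k - c k) / (t - 0))) = (g (\<gamma> t) - g (\<gamma> 0)) / (t - 0)) (at 0)"
    apply (rule eventually_mono[OF evgood])
    apply (erule eq)
    done
  then have "((\<lambda>t. (g (\<gamma> t) - g (\<gamma> 0)) / (t - 0)) \<longlongrightarrow> (\<Sum>k<n. pd k g c * D k)) (at 0)"
    by (rule Lim_transform_eventually[OF lim])
  then show ?thesis unfolding has_field_derivative_iff .
qed


fun Ck :: "nat \<Rightarrow> pt set \<Rightarrow> nat \<Rightarrow> (pt \<Rightarrow> real) \<Rightarrow> bool" where
  "Ck n U 0 h = continuous_on U h"
| "Ck n U (Suc k) h = (continuous_on U h \<and> (\<forall>i<n. \<forall>u\<in>U. (\<lambda>t. h (u(i := u i + t))) differentiable at 0)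
      \<and> (\<forall>i<n. Ck n U k (pd i h)))"

lemma ipd_snoc: "ipd (xs @ [i]) g = ipd xs (pd i g)"
  by (induction xs) auto

lemma smooth_on_0:
  "smooth_on n U h \<Longrightarrow> continuous_on U h \<and> (\<forall>i<n. \<forall>u\<in>U. (\<lambda>t. h (u(i := u i + t))) differentiable at 0)"
  unfolding smooth_on_def by (drule spec[of _ "[]"]) simp

lemma smooth_on_pd:
  assumes "smooth_on n U h" "i < n"
  shows "smooth_on n U (pd i h)"
  unfolding smooth_on_def
proof (intro allI impI)
  fix xs :: "nat list" assume "set xs \<subseteq> {..<n}"
  then have "set (xs @ [i]) \<subseteq> {..<n}" using assms(2) by auto
  then show "continuous_on U (ipd xs (pd i h)) \<and> (\<forall>j<n. \<forall>u\<in>U. (\<lambda>t. ipd xs (pd i h) (u(j := u j + t))) differentiable at 0)"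
    using assms(1) unfolding smooth_on_def ipd_snoc[symmetric] by blast
qed

lemma smooth_imp_Ck: "smooth_on n U h \<Longrightarrow> Ck n U k h"
proof (induction k arbitrary: h)
  case 0 then show ?case using smooth_on_0 by simp
next
  case (Suc k)
  have a: "continuous_on U h \<and> (\<forall>i<n. \<forall>u\<in>U. (\<lambda>t. h (u(i := u i + t))) differentiable at 0)"
    by (rule smooth_on_0[OF Suc.prems])
  have b: "\<forall>i<n. Ck n U k (pd i h)" using Suc.IH smooth_on_pd[OF Suc.prems] by blast
  show ?case unfolding Ck.simps using a b by blast
qed

lemma Ck_imp_smooth:
  assumes "\<forall>k. Ck n U k h"
  shows "smooth_on n U h"
proof -
  have "\<forall>h. (\<forall>k. Ck n U k h) \<longrightarrow> continuous_on U (ipd xs h) \<and>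
          (\<forall>i<n. \<forall>u\<in>U. (\<lambda>t. ipd xs h (u(i := u i + t))) differentiable at 0)"
    if "set xs \<subseteq> {..<n}" for xs
    using that
  proof (induction xs rule: rev_induct)
    case Nil
    show ?case
    proof (intro allI impI)
      fix h assume "\<forall>k. Ck n U k h"
      then have "Ck n U (Suc 0) h" by blast
      then show "continuous_on U (ipd [] h) \<and> (\<forall>i<n. \<forall>u\<in>U. (\<lambda>t. ipd [] h (u(i := u i + t))) differentiable at 0)"
        by simp
    qed
  next
    case (snoc i xs)
    show ?case
    proof (intro allI impI)
      fix h assume a: "\<forall>k. Ck n U k h"
      have "i < n" using snoc.prems by auto
      then have "\<forall>k. Ck n U k (pd i h)" using a by (metis Ck.simps(2))
      moreover have "set xs \<subseteq> {..<n}" using snoc.prems by auto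
      ultimately show "continuous_on U (ipd (xs @ [i]) h) \<and>
          (\<forall>j<n. \<forall>u\<in>U. (\<lambda>t. ipd (xs @ [i]) h (u(j := u j + t))) differentiable at 0)"
        using snoc.IH unfolding ipd_snoc by blast
    qed
  qed
  then show ?thesis using assms unfolding smooth_on_def by blast
qed

lemma Ck_mono: "Ck n U (Suc k) h \<Longrightarrow> Ck n U k h"
  by (induction k arbitrary: h) auto

lemma Ck_cong:
  assumes U: "openR n U"
  shows "Ck n U k h \<Longrightarrow> (\<forall>u\<in>U. h u = h' u) \<Longrightarrow> Ck n U k h'"
proof (induction k arbitrary: h h')
  case 0 then show ?case using continuous_on_eq by fastforce
next
  case (Suc k)
  have c: "continuous_on U h'" using Suc.prems continuous_on_eq by fastforce
  have hd: "\<forall>i<n. \<forall>u\<in>U. (\<lambda>t. h (u(i := u i + t))) differentiable at 0"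
    using Suc.prems(1) unfolding Ck.simps by blast
  have d: "\<forall>i<n. \<forall>u\<in>U. (\<lambda>t. h' (u(i := u i + t))) differentiable at 0"
  proof (intro allI impI ballI)
    fix i u assume "i < n" "u \<in> U"
    show "(\<lambda>t. h' (u(i := u i + t))) differentiable at 0"
      by (rule diffable_cong[OF U \<open>u \<in> U\<close> \<open>i < n\<close> Suc.prems(2)]) (use hd \<open>i < n\<close> \<open>u \<in> U\<close> in blast)
  qed
  have p: "\<forall>i<n. Ck n U k (pd i h')"
  proof (intro allI impI)
    fix i assume "i < n"
    then have "\<forall>u\<in>U. pd i h u = pd i h' u" using pd_cong[OF U] Suc.prems by blast
    moreover have "Ck n U k (pd i h)" using Suc.prems \<open>i<n\<close> by simp
    ultimately show "Ck n U k (pd i h')" using Suc.IH by blast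
  qed
  show ?case using c d p by simp
qed

lemma pd_const: "pd i (\<lambda>u. a) = (\<lambda>u. 0)"
  unfolding pd_def by (rule ext) (rule DERIV_imp_deriv, rule DERIV_const)

lemma Ck_const: "Ck n U k (\<lambda>u. a)"
  by (induction k arbitrary: a) (simp_all add: pd_const)

lemma pd_add:
  fixes a b :: "pt \<Rightarrow> real"
  assumes "(\<lambda>t. a (u(i := u i + t))) differentiable at 0" "(\<lambda>t. b (u(i := u i + t))) differentiable at 0"
  shows "pd i (\<lambda>u. a u + b u) u = pd i a u + pd i b u"
proof -
  have "((\<lambda>t. a (u(i := u i + t)) + b (u(i := u i + t))) has_real_derivative pd i a u + pd i b u) (at 0)"
    by (rule DERIV_add) (rule diffable_DERIV, fact)+
  then show ?thesis unfolding pd_def[of i "\<lambda>u. a u + b u"] by (rule DERIV_imp_deriv)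
qed

lemma pd_mult:
  fixes a b :: "pt \<Rightarrow> real"
  assumes "(\<lambda>t. a (u(i := u i + t))) differentiable at 0" "(\<lambda>t. b (u(i := u i + t))) differentiable at 0"
  shows "pd i (\<lambda>u. a u * b u) u = pd i a u * b u + pd i b u * a u"
    and "(\<lambda>t. a (u(i := u i + t)) * b (u(i := u i + t))) differentiable at 0"
proof -
  have "((\<lambda>t. a (u(i := u i + t)) * b (u(i := u i + t))) has_real_derivative
      pd i a u * b (u(i := u i + 0)) + pd i b u * a (u(i := u i + 0))) (at 0)"
    by (rule DERIV_mult) (rule diffable_DERIV, fact)+
  then have D: "((\<lambda>t. a (u(i := u i + t)) * b (u(i := u i + t))) has_real_derivative
      pd i a u * b u + pd i b u * a u) (at 0)" by simp
  then show "pd i (\<lambda>u. a u * b u) u = pd i a u * b u + pd i b u * a u"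
    unfolding pd_def[of i "\<lambda>u. a u * b u"] by (rule DERIV_imp_deriv)
  show "(\<lambda>t. a (u(i := u i + t)) * b (u(i := u i + t))) differentiable at 0"
    using D real_differentiable_def by blast
qed

lemma Ck_add:
  assumes U: "openR n U"
  shows "Ck n U k a \<Longrightarrow> Ck n U k b \<Longrightarrow> Ck n U k (\<lambda>u. a u + b u)"
proof (induction k arbitrary: a b)
  case 0 then show ?case by (simp add: continuous_on_add)
next
  case (Suc k)
  have p: "Ck n U k (pd i (\<lambda>u. a u + b u))" if "i < n" for i
  proof -
    have "Ck n U k (\<lambda>u. pd i a u + pd i b u)" using Suc that by simp
    moreover have "\<forall>u\<in>U. pd i a u + pd i b u = pd i (\<lambda>u. a u + b u) u"
      using Suc.prems that pd_add by simp
    ultimately show ?thesis using Ck_cong[OF U] by blast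
  qed
  show ?case using Suc.prems p by (simp add: continuous_on_add)
qed

lemma Ck_mult:
  assumes U: "openR n U"
  shows "Ck n U k a \<Longrightarrow> Ck n U k b \<Longrightarrow> Ck n U k (\<lambda>u. a u * b u)"
proof (induction k arbitrary: a b)
  case 0 then show ?case by (simp add: continuous_on_mult)
next
  case (Suc k)
  have ka: "Ck n U k a" and kb: "Ck n U k b" using Suc.prems Ck_mono by blast+
  have p: "Ck n U k (pd i (\<lambda>u. a u * b u))" if "i < n" for i
  proof -
    have "Ck n U k (\<lambda>u. pd i a u * b u)" using Suc.IH Suc.prems that kb by simp
    moreover have "Ck n U k (\<lambda>u. pd i b u * a u)" using Suc.IH Suc.prems that ka by simp
    ultimately have "Ck n U k (\<lambda>u. pd i a u * b u + pd i b u * a u)" using Ck_add[OF U] by blast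
    moreover have "\<forall>u\<in>U. pd i a u * b u + pd i b u * a u = pd i (\<lambda>u. a u * b u) u"
      using Suc.prems that pd_mult(1) by simp
    ultimately show ?thesis using Ck_cong[OF U] by blast
  qed
  have d: "\<forall>i<n. \<forall>u\<in>U. (\<lambda>t. a (u(i := u i + t)) * b (u(i := u i + t))) differentiable at 0"
    using Suc.prems pd_mult(2) by simp
  show ?case using Suc.prems p d by (simp add: continuous_on_mult)
qed

lemma Ck_sum:
  assumes U: "openR n U" and S: "finite S"
  shows "(\<forall>j\<in>S. Ck n U k (f j)) \<Longrightarrow> Ck n U k (\<lambda>u. \<Sum>j\<in>S. f j u)"
  using S
proof (induction S rule: finite_induct)
  case empty then show ?case using Ck_const by simp
next
  case (insert x F)
  then show ?case using Ck_add[OF U, of k "f x" "\<lambda>u. \<Sum>j\<in>F. f j u"] by simp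
qed

lemma comp_cont:
  assumes U: "openR n U" and f: "\<forall>j<n. smooth_on m V (\<lambda>u. f u j)" and fV: "\<forall>u\<in>V. f u \<in> U"
    and g: "continuous_on U g"
  shows "continuous_on V (\<lambda>u. g (f u))"
proof -
  have Ue: "U \<subseteq> euclid n" using U openR_def by blast
  have "continuous_on V f"
  proof (rule continuous_on_coordinatewise_then_product)
    fix j show "continuous_on V (\<lambda>x. f x j)"
    proof (cases "j < n")
      case True then show ?thesis using f smooth_on_0 by blast
    next
      case False
      then have "\<forall>x\<in>V. f x j = 0" using fV Ue by (auto simp: euclid_def)
      then show ?thesis using continuous_on_eq[of V "\<lambda>x. 0::real" "\<lambda>x. f x j"] by simp
    qed
  qed
  then show ?thesis using continuous_on_compose2[of U g V f] g fV by auto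
qed

lemma comp_pd:
  assumes V: "openR m V" and U: "openR n U" and f: "\<forall>j<n. smooth_on m V (\<lambda>u. f u j)"
    and fV: "\<forall>u\<in>V. f u \<in> U" and g: "smooth_on n U g" and u: "u \<in> V" and i: "i < m"
  shows "((\<lambda>t. g (f (u(i := u i + t)))) has_real_derivative
            (\<Sum>j<n. pd j g (f u) * pd i (\<lambda>u. f u j) u)) (at 0)"
proof (rule chain_line[OF U, where D = "\<lambda>j. pd i (\<lambda>u. f u j) u"])
  show "f u \<in> U" using fV u by blast
  show "\<forall>j<n. \<forall>y\<in>U. (\<lambda>t. g (y(j := y j + t))) differentiable at 0" using smooth_on_0[OF g] by blast
  show "\<forall>j<n. continuous_on U (pd j g)" using smooth_on_0 smooth_on_pd[OF g] by blast
  show "\<forall>j<n. ((\<lambda>t. f (u(i := u i + t)) j) has_real_derivative pd i (\<lambda>u. f u j) u) (at 0)"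
  proof (intro allI impI)
    fix j assume "j < n"
    then have "(\<lambda>t. f (u(i := u i + t)) j) differentiable at 0" using smooth_on_0 f u i by blast
    then show "((\<lambda>t. f (u(i := u i + t)) j) has_real_derivative pd i (\<lambda>u. f u j) u) (at 0)"
      using diffable_DERIV[of "\<lambda>u. f u j"] by simp
  qed
  show "f (u(i := u i + 0)) = f u" by simp
  have "eventually (\<lambda>t. u(i := u i + t) \<in> V) (nhds 0)" by (rule ev_line_in[OF V u i])
  then have "eventually (\<lambda>t. f (u(i := u i + t)) \<in> U) (nhds 0)"
    by (rule eventually_mono) (use fV in blast)
  then show "eventually (\<lambda>t. f (u(i := u i + t)) \<in> U) (at 0)"
    unfolding eventually_at_filter by (rule eventually_mono) simp
qed

lemma Ck_comp:
  assumes V: "openR m V" and U: "openR n U" and f: "\<forall>j<n. smooth_on m V (\<lambda>u. f u j)"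
    and fV: "\<forall>u\<in>V. f u \<in> U"
  shows "smooth_on n U g \<Longrightarrow> Ck m V k (\<lambda>u. g (f u))"
proof (induction k arbitrary: g)
  case 0 then show ?case using comp_cont[OF U f fV smooth_on_0[OF 0, THEN conjunct1]] by simp
next
  case (Suc k)
  have c: "continuous_on V (\<lambda>u. g (f u))" using comp_cont[OF U f fV] smooth_on_0 Suc.prems by blast
  have d: "\<forall>i<m. \<forall>u\<in>V. (\<lambda>t. g (f (u(i := u i + t)))) differentiable at 0"
    using comp_pd[OF V U f fV Suc.prems] real_differentiable_def by blast
  have p: "Ck m V k (pd i (\<lambda>u. g (f u)))" if i: "i < m" for i
  proof -
    have "Ck m V k (\<lambda>u. \<Sum>j<n. pd j g (f u) * pd i (\<lambda>u. f u j) u)"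
    proof (rule Ck_sum[OF V], simp, intro ballI)
      fix j assume "j \<in> {..<n}"
      then have j: "j < n" by simp
      have "Ck m V k (\<lambda>u. pd j g (f u))" using Suc.IH smooth_on_pd[OF Suc.prems j] by blast
      moreover have "Ck m V k (pd i (\<lambda>u. f u j))" using smooth_imp_Ck smooth_on_pd f j i by blast
      ultimately show "Ck m V k (\<lambda>u. pd j g (f u) * pd i (\<lambda>u. f u j) u)" using Ck_mult[OF V] by blast
    qed
    moreover have "\<forall>u\<in>V. (\<Sum>j<n. pd j g (f u) * pd i (\<lambda>u. f u j) u) = pd i (\<lambda>u. g (f u)) u"
    proof
      fix u assume "u \<in> V"
      show "(\<Sum>j<n. pd j g (f u) * pd i (\<lambda>u. f u j) u) = pd i (\<lambda>u. g (f u)) u"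
        unfolding pd_def[of i "\<lambda>u. g (f u)"]
        using DERIV_imp_deriv[OF comp_pd[OF V U f fV Suc.prems \<open>u\<in>V\<close> i]] by simp
    qed
    ultimately show ?thesis using Ck_cong[OF V] by blast
  qed
  show ?case using c d p by simp
qed

lemma smooth_comp:
  assumes V: "openR m V" and U: "openR n U" and f: "\<forall>j<n. smooth_on m V (\<lambda>u. f u j)"
    and fV: "\<forall>u\<in>V. f u \<in> U" and g: "smooth_on n U g"
  shows "smooth_on m V (\<lambda>u. g (f u))"
  using Ck_imp_smooth Ck_comp[OF V U f fV g] by blast


lemma smooth_on_subset: "U' \<subseteq> U \<Longrightarrow> smooth_on n U h \<Longrightarrow> smooth_on n U' h"
  unfolding smooth_on_def by (meson continuous_on_subset subsetD)

lemma map_cont: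
  assumes Ue: "U \<subseteq> euclid n" and f: "\<forall>j<n. smooth_on m V (\<lambda>u. f u j)" and fV: "\<forall>u\<in>V. f u \<in> U"
  shows "continuous_on V f"
proof (rule continuous_on_coordinatewise_then_product)
  fix j show "continuous_on V (\<lambda>x. f x j)"
  proof (cases "j < n")
    case True then show ?thesis using f smooth_on_0 by blast
  next
    case False
    then have "\<forall>x\<in>V. f x j = 0" using fV Ue by (auto simp: euclid_def)
    then show ?thesis using continuous_on_eq[of V "\<lambda>x. 0::real" "\<lambda>x. f x j"] by simp
  qed
qed

lemma openR_preimage:
  assumes W: "openR m W" and W': "openR n W'" and f: "\<forall>j<n. smooth_on m W (\<lambda>u. f u j)"
    and fW: "\<forall>u\<in>W. f u \<in> U" and Ue: "U \<subseteq> euclid n" and sub: "W' \<subseteq> U"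
  shows "openR m (W \<inter> f -` W')"
proof -
  have cont: "continuous_on W f" using map_cont[OF Ue f fW] .
  obtain T where T: "open T" "W' = euclid n \<inter> T" using W' openR_def openin_open by metis
  then have "W' = U \<inter> T" using sub Ue by blast
  then have "openin (top_of_set U) W'" using T(1) openin_open by blast
  moreover have "f ` W \<subseteq> U" using fW by blast
  ultimately have "openin (top_of_set W) (W \<inter> f -` W')"
    using continuous_openin_preimage[OF cont] by blast
  moreover have "openin (top_of_set (euclid m)) W" using W openR_def by blast
  ultimately have "openin (top_of_set (euclid m)) (W \<inter> f -` W')" using openin_trans by blast
  moreover have "W \<inter> f -` W' \<subseteq> euclid m" using W openR_def by blast
  ultimately show ?thesis using openR_def by blast
qed

lemma is_mor_comp:
  assumes f: "is_mor P Q W f" and g: "is_mor Q R W' g" and Qe: "domo Q \<subseteq> euclid (dimo Q)"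
  shows "is_mor P R (W \<inter> f -` W') (g \<circ> f)"
proof -
  have W: "openR (dimo P) W" and W0: "0 \<in> W" and WP: "W \<subseteq> domo P"
    and fs: "smooth_map (dimo P) W (dimo Q) (domo Q) f" and f0: "f 0 = 0"
    and fp: "\<forall>w\<in>W. plto P w = plto Q (f w)" using f unfolding is_mor_def by auto
  have W': "openR (dimo Q) W'" and W'0: "0 \<in> W'" and W'Q: "W' \<subseteq> domo Q"
    and gs: "smooth_map (dimo Q) W' (dimo R) (domo R) g" and g0: "g 0 = 0"
    and gp: "\<forall>w\<in>W'. plto Q w = plto R (g w)" using g unfolding is_mor_def by auto
  define V where "V = W \<inter> f -` W'"
  have fc: "\<forall>j<dimo Q. smooth_on (dimo P) W (\<lambda>u. f u j)" and fW: "\<forall>u\<in>W. f u \<in> domo Q"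
    using fs unfolding smooth_map_def by auto
  have V: "openR (dimo P) V" unfolding V_def by (rule openR_preimage[OF W W' fc fW Qe W'Q])
  have fcV: "\<forall>j<dimo Q. smooth_on (dimo P) V (\<lambda>u. f u j)" using fc smooth_on_subset[of V W] V_def by blast
  have fV: "\<forall>u\<in>V. f u \<in> W'" unfolding V_def by blast
  have gc: "\<forall>j<dimo R. smooth_on (dimo Q) W' (\<lambda>y. g y j)" and gW: "g ` W' \<subseteq> domo R"
    using gs unfolding smooth_map_def by auto
  have sm: "smooth_map (dimo P) V (dimo R) (domo R) (g \<circ> f)"
    unfolding smooth_map_def
  proof
    show "(g \<circ> f) ` V \<subseteq> domo R" using gW fV by auto
    show "\<forall>j<dimo R. smooth_on (dimo P) V (\<lambda>u. (g \<circ> f) u j)"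
    proof (intro allI impI)
      fix j assume "j < dimo R"
      then have "smooth_on (dimo Q) W' (\<lambda>y. g y j)" using gc by blast
      from smooth_comp[OF V W' fcV fV this] show "smooth_on (dimo P) V (\<lambda>u. (g \<circ> f) u j)"
        by (simp add: o_def)
    qed
  qed
  show ?thesis unfolding is_mor_def V_def[symmetric]
    using V sm W0 W'0 f0 g0 WP fp gp by (auto simp: V_def)
qed


lemma fun_sum_apply: "(\<Sum>i\<in>S. f i) x = (\<Sum>i\<in>S. f i x)"
  by (induction S rule: infinite_finite_induct) auto

lemma scaleR_fun_apply: "(a *\<^sub>R f) x = a *\<^sub>R f x"
  by (simp add: scaleR_fun_def)

lemma minus_fun_apply': "(f - g) x = f x - (g x :: 'b::ab_group_add)"
  by simp

lemma euclid_0: "0 \<in> euclid n" by (simp add: euclid_def)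
lemma euclid_add: "u \<in> euclid n \<Longrightarrow> w \<in> euclid n \<Longrightarrow> u + w \<in> euclid n" by (simp add: euclid_def)
lemma euclid_scale: "u \<in> euclid n \<Longrightarrow> a *\<^sub>R u \<in> euclid n" by (simp add: euclid_def scaleR_fun_apply)

lemma diff0_add: "diff0 n m f (u + w) = diff0 n m f u + diff0 n m f w"
  by (auto simp: diff0_def fun_eq_iff distrib_left sum.distrib)

lemma diff0_scale: "diff0 n m f (a *\<^sub>R u) = a *\<^sub>R diff0 n m f u"
  by (auto simp: diff0_def fun_eq_iff scaleR_fun_apply sum_distrib_left mult_ac)

lemma diff0_zero: "diff0 n m f 0 = 0"
  by (auto simp: diff0_def fun_eq_iff)

lemma diff0_euclid: "diff0 n m f v \<in> euclid m"
  by (simp add: diff0_def euclid_def)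

lemma inj_ds_add: "inj_ds P (u + w) = inj_ds P u + inj_ds P w"
  by (auto simp: inj_ds_def fun_eq_iff)

lemma inj_ds_scale: "inj_ds P (a *\<^sub>R u) = a *\<^sub>R inj_ds P u"
  by (auto simp: inj_ds_def fun_eq_iff scaleR_fun_apply)

lemma inj_ds_zero: "inj_ds P 0 = 0"
  by (auto simp: inj_ds_def fun_eq_iff)

lemma inj_ds_diff: "inj_ds P u - inj_ds P w = inj_ds P (u - w)"
  by (auto simp: inj_ds_def fun_eq_iff)

lemma coset_eq:
  assumes R: "subspace R" and d: "a - b \<in> R"
  shows "coset a R = coset b R"
proof
  show "coset a R \<subseteq> coset b R"
  proof
    fix x assume "x \<in> coset a R"
    then obtain r where r: "r \<in> R" "x = a + r" by (auto simp: coset_def)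
    then have "x = b + ((a - b) + r)" by simp
    moreover have "(a - b) + r \<in> R" using R d r(1) subspace_add by blast
    ultimately show "x \<in> coset b R" unfolding coset_def by blast
  qed
next
  show "coset b R \<subseteq> coset a R"
  proof
    fix x assume "x \<in> coset b R"
    then obtain r where r: "r \<in> R" "x = b + r" by (auto simp: coset_def)
    then have "x = a + (r - (a - b))" by simp
    moreover have "r - (a - b) \<in> R" using R d r(1) subspace_diff by blast
    ultimately show "x \<in> coset a R" unfolding coset_def by blast
  qed
qed

lemma coset_self: "subspace R \<Longrightarrow> a \<in> coset a R"
  unfolding coset_def using subspace_0 by force

lemma coset_mem: "c \<in> coset a R \<Longrightarrow> c - a \<in> R"
  by (auto simp: coset_def)

lemma some_coset: "subspace R \<Longrightarrow> (SOME c. c \<in> coset a R) - a \<in> R"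
  by (rule coset_mem, rule someI_ex) (use coset_self in blast)

lemma coset_eq_iff: "subspace R \<Longrightarrow> coset a R = coset b R \<longleftrightarrow> a - b \<in> R"
  using coset_eq coset_self coset_mem by metis

lemma qplus_coset:
  assumes R: "subspace R"
  shows "qplus R (coset a R) (coset b R) = coset (a + b) R"
  unfolding qplus_def
proof (rule coset_eq[OF R])
  have "(SOME c. c \<in> coset a R) - a \<in> R" "(SOME c. c \<in> coset b R) - b \<in> R"
    using some_coset[OF R] by blast+
  then have "((SOME c. c \<in> coset a R) - a) + ((SOME c. c \<in> coset b R) - b) \<in> R"
    using R subspace_add by blast
  then show "(SOME c. c \<in> coset a R) + (SOME d. d \<in> coset b R) - (a + b) \<in> R"
    by (simp add: algebra_simps)
qed

lemma qscale_coset: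
  assumes R: "subspace R"
  shows "qscale R r (coset a R) = coset (r *\<^sub>R a) R"
  unfolding qscale_def
proof (rule coset_eq[OF R])
  have "(SOME c. c \<in> coset a R) - a \<in> R" using some_coset[OF R] by blast
  then have "r *\<^sub>R ((SOME c. c \<in> coset a R) - a) \<in> R" using R subspace_scale by blast
  then show "r *\<^sub>R (SOME c. c \<in> coset a R) - r *\<^sub>R a \<in> R"
    by (simp add: algebra_simps)
qed

lemma dsumD:
  assumes "s \<in> dsum I"
  shows "finite {P. s P \<noteq> 0}" "\<And>P. s P \<noteq> 0 \<Longrightarrow> P \<in> I" "\<And>P. P \<in> I \<Longrightarrow> s P \<in> euclid (dimo P)"
  using assms unfolding dsum_def by blast+

lemma dsumI:
  assumes "finite {P. s P \<noteq> 0}" "\<And>P. s P \<noteq> 0 \<Longrightarrow> P \<in> I" "\<And>P. P \<in> I \<Longrightarrow> s P \<in> euclid (dimo P)"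
  shows "s \<in> dsum I"
  using assms unfolding dsum_def by blast

lemma subspace_dsum: "subspace (dsum I)"
  unfolding subspace_def
proof (intro conjI ballI allI)
  show "0 \<in> dsum I" by (rule dsumI) (simp_all add: euclid_0)
next
  fix s t assume s: "s \<in> dsum I" and t: "t \<in> dsum I"
  show "s + t \<in> dsum I"
  proof (rule dsumI)
    have "{P. (s + t) P \<noteq> 0} \<subseteq> {P. s P \<noteq> 0} \<union> {P. t P \<noteq> 0}" by auto
    then show "finite {P. (s + t) P \<noteq> 0}" using dsumD(1)[OF s] dsumD(1)[OF t] by (meson finite_UnI finite_subset)
  next
    fix P assume "(s + t) P \<noteq> 0"
    then have "s P \<noteq> 0 \<or> t P \<noteq> 0" by auto
    then show "P \<in> I" using dsumD(2)[OF s] dsumD(2)[OF t] by blast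
  next
    fix P assume "P \<in> I"
    then show "(s + t) P \<in> euclid (dimo P)" using dsumD(3)[OF s] dsumD(3)[OF t] euclid_add by simp
  qed
next
  fix c :: real and s assume s: "s \<in> dsum I"
  show "c *\<^sub>R s \<in> dsum I"
  proof (rule dsumI)
    have "{P. (c *\<^sub>R s) P \<noteq> 0} \<subseteq> {P. s P \<noteq> 0}" by (auto simp: scaleR_fun_apply)
    then show "finite {P. (c *\<^sub>R s) P \<noteq> 0}" using dsumD(1)[OF s] by (rule finite_subset)
  next
    fix P assume "(c *\<^sub>R s) P \<noteq> 0"
    then have "s P \<noteq> 0" by (auto simp: scaleR_fun_apply)
    then show "P \<in> I" using dsumD(2)[OF s] by blast
  next
    fix P assume "P \<in> I"
    then have "s P \<in> euclid (dimo P)" using dsumD(3)[OF s] by blast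
    then show "(c *\<^sub>R s) P \<in> euclid (dimo P)" by (simp add: euclid_def scaleR_fun_apply)
  qed
qed

lemma inj_in_dsum: "P \<in> I \<Longrightarrow> v \<in> euclid (dimo P) \<Longrightarrow> inj_ds P v \<in> dsum I"
proof -
  assume P: "P \<in> I" and v: "v \<in> euclid (dimo P)"
  have "{Q. inj_ds P v Q \<noteq> 0} \<subseteq> {P}" by (auto simp: inj_ds_def)
  then have "finite {Q. inj_ds P v Q \<noteq> 0}" by (rule finite_subset) simp
  then show ?thesis using P v by (auto simp: dsum_def inj_ds_def euclid_0)
qed

lemma dsum_decomp:
  assumes "finite {P. s P \<noteq> 0}"
  shows "s = (\<Sum>P\<in>{P. s P \<noteq> 0}. inj_ds P (s P))"
proof
  fix Q
  have "(\<Sum>P\<in>{P. s P \<noteq> 0}. inj_ds P (s P)) Q = (\<Sum>P\<in>{P. s P \<noteq> 0}. if Q = P then s P else 0)"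
    by (simp add: fun_sum_apply inj_ds_def)
  also have "\<dots> = s Q" using assms by (simp add: sum.delta')
  finally show "s Q = (\<Sum>P\<in>{P. s P \<noteq> 0}. inj_ds P (s P)) Q" by simp
qed

lemma dsum_mono:
  assumes "I \<subseteq> J" "\<forall>P\<in>J. 0 \<in> euclid (dimo P)"
  shows "dsum I \<subseteq> dsum J"
proof
  fix s assume s: "s \<in> dsum I"
  show "s \<in> dsum J"
  proof (rule dsumI)
    show "finite {P. s P \<noteq> 0}" by (rule dsumD(1)[OF s])
    fix P assume "s P \<noteq> 0" then show "P \<in> J" using dsumD(2)[OF s] assms(1) by blast
  next
    fix P assume P: "P \<in> J"
    show "s P \<in> euclid (dimo P)"
    proof (cases "s P = 0")
      case True then show ?thesis using assms(2) P by simp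
    next
      case False then have "P \<in> I" using dsumD(2)[OF s] by blast
      then show ?thesis using dsumD(3)[OF s] by blast
    qed
  qed
qed

lemma rels_mono:
  assumes "\<And>P Q W f. M P Q W f \<Longrightarrow> M' P Q W f"
  shows "rels M \<subseteq> rels M'"
  unfolding rels_def by (rule span_mono) (use assms in blast)

lemma rels_gen:
  "M P Q W f \<Longrightarrow> v \<in> euclid (dimo P) \<Longrightarrow> inj_ds Q (diff0 (dimo P) (dimo Q) f v) - inj_ds P v \<in> rels M"
  unfolding rels_def by (rule span_base) blast

lemma subspace_rels: "subspace (rels M)"
  unfolding rels_def by (rule subspace_span)


lemma germ_pd:
  assumes "germ_eq n W f W' f'" "i < n"
  shows "pd i (\<lambda>u. f u j) 0 = pd i (\<lambda>u. f' u j) 0"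
proof -
  obtain W'' where W'': "openR n W''" "0 \<in> W''" "\<forall>w\<in>W''. f w = f' w"
    using assms(1) unfolding germ_eq_def by blast
  show ?thesis by (rule pd_cong[OF W''(1) W''(2) assms(2)]) (use W''(3) in simp)
qed

lemma diff0_apply:
  "j < m \<Longrightarrow> diff0 n m f v j = (\<Sum>i<n. pd i (\<lambda>u. f u j) 0 * v i)"
  "\<not> j < m \<Longrightarrow> diff0 n m f v j = 0"
  by (simp_all add: diff0_def)

lemma diff0_germ:
  assumes g: "germ_eq n W f W' f'"
  shows "diff0 n m f v = diff0 n m f' v"
proof
  fix j show "diff0 n m f v j = diff0 n m f' v j"
  proof (cases "j < m")
    case True
    have "(\<Sum>i<n. pd i (\<lambda>u. f u j) 0 * v i) = (\<Sum>i<n. pd i (\<lambda>u. f' u j) 0 * v i)"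
      by (rule sum.cong[OF refl]) (simp add: germ_pd[OF g])
    then show ?thesis using True by (simp add: diff0_apply)
  next
    case False then show ?thesis by (simp add: diff0_apply)
  qed
qed

lemma diff0_comp:
  assumes f: "is_mor P Q W f" and g: "is_mor Q R W' g" and Qe: "domo Q \<subseteq> euclid (dimo Q)"
  shows "diff0 (dimo P) (dimo R) (g \<circ> f) v = diff0 (dimo Q) (dimo R) g (diff0 (dimo P) (dimo Q) f v)"
proof -
  have W: "openR (dimo P) W" and fs: "smooth_map (dimo P) W (dimo Q) (domo Q) f" and f0: "f 0 = 0"
    using f unfolding is_mor_def by auto
  have W': "openR (dimo Q) W'" and gs: "smooth_map (dimo Q) W' (dimo R) (domo R) g"
    using g unfolding is_mor_def by auto
  define V where "V = W \<inter> f -` W'"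
  have c: "is_mor P R V (g \<circ> f)" unfolding V_def by (rule is_mor_comp[OF f g Qe])
  then have V: "openR (dimo P) V" "0 \<in> V" unfolding is_mor_def by auto
  have fc: "\<forall>j<dimo Q. smooth_on (dimo P) W (\<lambda>u. f u j)" using fs unfolding smooth_map_def by auto
  have fcV: "\<forall>j<dimo Q. smooth_on (dimo P) V (\<lambda>u. f u j)" using fc smooth_on_subset[of V W] V_def by blast
  have fV: "\<forall>u\<in>V. f u \<in> W'" unfolding V_def by blast
  have gc: "\<forall>j<dimo R. smooth_on (dimo Q) W' (\<lambda>y. g y j)" using gs unfolding smooth_map_def by auto
  have pdc: "pd i (\<lambda>u. g (f u) j) 0 = (\<Sum>l<dimo Q. pd l (\<lambda>y. g y j) 0 * pd i (\<lambda>u. f u l) 0)"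
    if i: "i < dimo P" and j: "j < dimo R" for i j
  proof -
    have gj: "smooth_on (dimo Q) W' (\<lambda>y. g y j)" using gc j by blast
    have D: "((\<lambda>t. g (f (0(i := 0 i + t))) j) has_real_derivative
        (\<Sum>l<dimo Q. pd l (\<lambda>y. g y j) (f 0) * pd i (\<lambda>u. f u l) 0)) (at 0)"
      by (rule comp_pd[OF V(1) W' fcV fV gj V(2) i])
    have "pd i (\<lambda>u. g (f u) j) 0 = (\<Sum>l<dimo Q. pd l (\<lambda>y. g y j) (f 0) * pd i (\<lambda>u. f u l) 0)"
      unfolding pd_def[of i "\<lambda>u. g (f u) j"] by (rule DERIV_imp_deriv[OF D])
    then show ?thesis using f0 by simp
  qed
  show ?thesis
  proof
    fix j show "diff0 (dimo P) (dimo R) (g \<circ> f) v j = diff0 (dimo Q) (dimo R) g (diff0 (dimo P) (dimo Q) f v) j"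
    proof (cases "j < dimo R")
      case False then show ?thesis by (simp add: diff0_apply)
    next
      case True
      have "diff0 (dimo P) (dimo R) (g \<circ> f) v j = (\<Sum>i<dimo P. pd i (\<lambda>u. (g \<circ> f) u j) 0 * v i)"
        using True by (rule diff0_apply)
      also have "\<dots> = (\<Sum>i<dimo P. (\<Sum>l<dimo Q. pd l (\<lambda>y. g y j) 0 * pd i (\<lambda>u. f u l) 0) * v i)"
        by (rule sum.cong[OF refl]) (simp add: pdc True)
      also have "\<dots> = (\<Sum>i<dimo P. \<Sum>l<dimo Q. pd l (\<lambda>y. g y j) 0 * (pd i (\<lambda>u. f u l) 0 * v i))"
        by (simp add: sum_distrib_right mult.assoc)
      also have "\<dots> = (\<Sum>l<dimo Q. \<Sum>i<dimo P. pd l (\<lambda>y. g y j) 0 * (pd i (\<lambda>u. f u l) 0 * v i))"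
        by (rule sum.swap)
      also have "\<dots> = (\<Sum>l<dimo Q. pd l (\<lambda>y. g y j) 0 * diff0 (dimo P) (dimo Q) f v l)"
      proof (rule sum.cong[OF refl])
        fix l assume "l \<in> {..<dimo Q}"
        then have "diff0 (dimo P) (dimo Q) f v l = (\<Sum>i<dimo P. pd i (\<lambda>u. f u l) 0 * v i)"
          by (simp add: diff0_apply)
        then show "(\<Sum>i<dimo P. pd l (\<lambda>y. g y j) 0 * (pd i (\<lambda>u. f u l) 0 * v i)) =
            pd l (\<lambda>y. g y j) 0 * diff0 (dimo P) (dimo Q) f v l"
          by (simp add: sum_distrib_left)
      qed
      also have "\<dots> = diff0 (dimo Q) (dimo R) g (diff0 (dimo P) (dimo Q) f v) j"
        using True by (simp add: diff0_apply)
      finally show ?thesis .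
    qed
  qed
qed

lemma pd_coord: "pd i (\<lambda>u. u j) y = (if i = j then 1 else 0)"
proof (cases "i = j")
  case True
  have D: "((\<lambda>t. y j + t) has_real_derivative 0 + 1) (at 0)"
    by (rule DERIV_add[OF DERIV_const DERIV_ident])
  have "(\<lambda>t. (y(i := y i + t)) j) = (\<lambda>t. y j + t)" using True by simp
  then show ?thesis unfolding pd_def using True DERIV_imp_deriv[OF D] by simp
next
  case False
  have "(\<lambda>t. (y(i := y i + t)) j) = (\<lambda>t. y j)" using False by auto
  then show ?thesis unfolding pd_def using False DERIV_imp_deriv[OF DERIV_const] by simp
qed

lemma diff0_id:
  assumes v: "v \<in> euclid n"
  shows "diff0 n n id v = v"
proof
  fix j show "diff0 n n id v j = v j"
  proof (cases "j < n")
    case True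
    have "diff0 n n id v j = (\<Sum>i<n. pd i (\<lambda>u. id u j) 0 * v i)" using True by (rule diff0_apply)
    also have "\<dots> = (\<Sum>i<n. if i = j then v i else 0)"
      by (rule sum.cong[OF refl]) (simp add: pd_coord)
    also have "\<dots> = v j" using True by simp
    finally show ?thesis .
  next
    case False then show ?thesis using v by (simp add: diff0_apply euclid_def)
  qed
qed

lemma Gobj_props:
  assumes "P \<in> Gobj plot x"
  shows "openR (dimo P) (domo P)" "domo P \<subseteq> euclid (dimo P)" "0 \<in> domo P"
  using assms unfolding Gobj_def dimo_def domo_def openR_def by auto

lemma sub_mor:
  assumes "subcategory plot x Gob M" "M P Q W f"
  shows "P \<in> Gob \<and> Q \<in> Gob \<and> is_mor P Q W f"
proof -
  have "\<forall>P Q W f. M P Q W f \<longrightarrow> P \<in> Gob \<and> Q \<in> Gob \<and> is_mor P Q W f"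
    by (rule assms(1)[unfolded subcategory_def, THEN conjunct2, THEN conjunct1])
  then show ?thesis using assms(2) by blast
qed

lemma sub_Gob: "subcategory plot x Gob M \<Longrightarrow> Gob \<subseteq> Gobj plot x"
  unfolding subcategory_def by (rule conjunct1)

lemma sub_id:
  assumes "subcategory plot x Gob M" "P \<in> Gob"
  shows "M P P (domo P) id"
proof -
  have "\<forall>P\<in>Gob. M P P (domo P) id"
    by (rule assms(1)[unfolded subcategory_def, THEN conjunct2, THEN conjunct2, THEN conjunct2, THEN conjunct1])
  then show ?thesis using assms(2) by blast
qed

lemma rels_M_G:
  assumes sub: "subcategory plot x Gob M"
  shows "rels M \<subseteq> rels (Gmor plot x)"
proof (rule rels_mono)
  fix P Q W f assume m: "M P Q W f"
  have "P \<in> Gob \<and> Q \<in> Gob \<and> is_mor P Q W f" using sub_mor[of plot x Gob M P Q W f] sub m by blast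
  moreover have "Gob \<subseteq> Gobj plot x" by (rule sub_Gob[OF sub])
  ultimately show "Gmor plot x P Q W f" unfolding Gmor_def by blast
qed

lemma surj_part:
  assumes lg: "local_generating_set plot x Gob" and s: "s \<in> dsum (Gobj plot x)"
  shows "\<exists>t\<in>dsum Gob. s - t \<in> rels (Gmor plot x)"
proof -
  define ch where "ch P = (SOME a. fst a \<in> Gob \<and> Gmor plot x P (fst a) (fst (snd a)) (snd (snd a)))" for P
  have ch: "fst (ch P) \<in> Gob \<and> Gmor plot x P (fst (ch P)) (fst (snd (ch P))) (snd (snd (ch P)))"
    if PO: "P \<in> Gobj plot x" for P
  proof -
    obtain Q W f where "Q \<in> Gob" "Gmor plot x P Q W f"
      using lg PO unfolding local_generating_set_def by blast
    then have "\<exists>a. fst a \<in> Gob \<and> Gmor plot x P (fst a) (fst (snd a)) (snd (snd a))"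
      by (intro exI[of _ "(Q, W, f)"]) simp
    then show ?thesis unfolding ch_def
      by (rule someI_ex[of "\<lambda>a. fst a \<in> Gob \<and> Gmor plot x P (fst a) (fst (snd a)) (snd (snd a))"])
  qed
  define S where "S = {P. s P \<noteq> 0}"
  have Sfin: "finite S" using dsumD(1)[OF s] S_def by simp
  have SO: "P \<in> Gobj plot x" if "P \<in> S" for P using dsumD(2)[OF s] that S_def by blast
  have sE: "s P \<in> euclid (dimo P)" if "P \<in> S" for P using dsumD(3)[OF s] SO[OF that] by blast
  define tm where "tm P = inj_ds (fst (ch P)) (diff0 (dimo P) (dimo (fst (ch P))) (snd (snd (ch P))) (s P))" for P
  define t where "t = (\<Sum>P\<in>S. tm P)"
  have "t \<in> dsum Gob" unfolding t_def
  proof (rule subspace_sum[OF subspace_dsum])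
    fix P assume "P \<in> S"
    show "tm P \<in> dsum Gob" unfolding tm_def
      by (rule inj_in_dsum) (use ch[OF SO[OF \<open>P \<in> S\<close>]] diff0_euclid in auto)
  qed
  moreover have "s - t \<in> rels (Gmor plot x)"
  proof -
    have sdec: "(\<Sum>P\<in>S. inj_ds P (s P)) = s"
      unfolding S_def by (rule dsum_decomp[symmetric]) (use dsumD(1)[OF s] in simp)
    have "s - t = (\<Sum>P\<in>S. inj_ds P (s P)) - (\<Sum>P\<in>S. tm P)" unfolding t_def sdec ..
    also have "\<dots> = (\<Sum>P\<in>S. inj_ds P (s P) - tm P)" by (simp add: sum_subtractf)
    also have "\<dots> \<in> rels (Gmor plot x)"
    proof (rule subspace_sum[OF subspace_rels])
      fix P assume P: "P \<in> S"
      have "tm P - inj_ds P (s P) \<in> rels (Gmor plot x)"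
        unfolding tm_def by (rule rels_gen) (use ch[OF SO[OF P]] sE[OF P] in auto)
      then have "- (tm P - inj_ds P (s P)) \<in> rels (Gmor plot x)" by (rule subspace_neg[OF subspace_rels])
      then show "inj_ds P (s P) - tm P \<in> rels (Gmor plot x)" by simp
    qed
    finally show ?thesis .
  qed
  ultimately show ?thesis by blast
qed


definition cval :: "'a gobj \<Rightarrow> 'a gobj \<times> pt set \<times> (pt \<Rightarrow> pt) \<Rightarrow> pt \<Rightarrow> 'a gobj \<Rightarrow> pt" where
  "cval P a v = inj_ds (fst a) (diff0 (dimo P) (dimo (fst a)) (snd (snd a)) v)"

lemma arr_rel:
  assumes sub: "subcategory plot x Gob M"
    and arr: "(a, b) \<in> comma_arr plot x Gob M P"
  shows "cval P b v - cval P a v \<in> rels M"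
proof -
  obtain Q W f where a: "a = (Q, W, f)" by (cases a) auto
  obtain Q' W' f' where b: "b = (Q', W', f')" by (cases b) auto
  from arr obtain Wg g where Q: "Q \<in> Gob" "Gmor plot x P Q W f" and Mg: "M Q Q' Wg g"
    and ge: "germ_eq (dimo P) (W \<inter> f -` Wg) (g \<circ> f) W' f'"
    unfolding comma_arr_def comma_obj_def a b by blast
  have fm: "is_mor P Q W f" using Q(2) unfolding Gmor_def by blast
  have gm: "is_mor Q Q' Wg g" using sub_mor[of plot x Gob M Q Q' Wg g] sub Mg by blast
  have QO: "Q \<in> Gobj plot x" using sub_Gob[of plot x Gob M] sub Q(1) by blast
  have Qe: "domo Q \<subseteq> euclid (dimo Q)" using Gobj_props(2)[of Q plot x] QO by blast
  have "diff0 (dimo P) (dimo Q') f' v = diff0 (dimo P) (dimo Q') (g \<circ> f) v"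
    using diff0_germ[of "dimo P" "W \<inter> f -` Wg" "g \<circ> f" W' f' "dimo Q'" v] ge by simp
  also have "\<dots> = diff0 (dimo Q) (dimo Q') g (diff0 (dimo P) (dimo Q) f v)"
    by (rule diff0_comp[OF fm gm Qe])
  finally have eq: "diff0 (dimo P) (dimo Q') f' v = diff0 (dimo Q) (dimo Q') g (diff0 (dimo P) (dimo Q) f v)" .
  have "inj_ds Q' (diff0 (dimo Q) (dimo Q') g (diff0 (dimo P) (dimo Q) f v)) - inj_ds Q (diff0 (dimo P) (dimo Q) f v) \<in> rels M"
    using rels_gen[of M Q Q' Wg g "diff0 (dimo P) (dimo Q) f v"] Mg diff0_euclid by blast
  then show ?thesis unfolding cval_def a b using eq by simp
qed

lemma tel_diff: "(x - y) + (y - z) = x - (z::'b::ab_group_add)" by simp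

lemma wd_rel:
  assumes sub: "subcategory plot x Gob M"
    and ab: "(a, b) \<in> (comma_arr plot x Gob M P \<union> (comma_arr plot x Gob M P)\<inverse>)\<^sup>*"
  shows "cval P a v - cval P b v \<in> rels M"
  using ab
proof (induction rule: rtrancl_induct)
  case base show ?case using subspace_0[OF subspace_rels, of M] by (simp only: diff_self)
next
  case (step b c)
  have "cval P b v - cval P c v \<in> rels M"
  proof (cases "(b, c) \<in> comma_arr plot x Gob M P")
    case True
    then have "cval P c v - cval P b v \<in> rels M" by (rule arr_rel[OF sub])
    then have "- (cval P c v - cval P b v) \<in> rels M" by (rule subspace_neg[OF subspace_rels])
    then show ?thesis by (simp only: minus_diff_eq)
  next
    case False
    then have "(c, b) \<in> comma_arr plot x Gob M P" using step.hyps(2) by blast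
    then show ?thesis by (rule arr_rel[OF sub])
  qed
  then have "(cval P a v - cval P b v) + (cval P b v - cval P c v) \<in> rels M"
    using step.IH subspace_add[OF subspace_rels] by blast
  then show ?case by (simp only: tel_diff)
qed

lemma cval_add: "cval P a (v + w) = cval P a v + cval P a w"
  unfolding cval_def by (simp add: diff0_add inj_ds_add)

lemma cval_scale: "cval P a (r *\<^sub>R v) = r *\<^sub>R cval P a v"
  unfolding cval_def by (simp add: diff0_scale inj_ds_scale)

lemma cval_zero: "cval P a 0 = 0"
  unfolding cval_def by (simp add: diff0_zero inj_ds_zero)

lemma inj_ds_apply: "inj_ds P v Q = (if Q = P then v else 0)"
  by (simp add: inj_ds_def)

lemma inj_part:
  assumes sub: "subcategory plot x Gob M" and fin: "final_subcategory plot x Gob M"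
    and u: "u \<in> dsum Gob" and uG: "u \<in> rels (Gmor plot x)"
  shows "u \<in> rels M"
proof -
  have GobO: "Gob \<subseteq> Gobj plot x" using sub_Gob[of plot x Gob M] sub by blast
  define c where "c P = (SOME a. a \<in> comma_obj plot x Gob P)" for P
  have cP: "c P \<in> comma_obj plot x Gob P" if "P \<in> Gobj plot x" for P
  proof -
    have "comma_obj plot x Gob P \<noteq> {}" using fin that unfolding final_subcategory_def by blast
    then show ?thesis unfolding c_def by (simp add: some_in_eq)
  qed
  have WD: "cval P a v - cval P b v \<in> rels M"
    if "P \<in> Gobj plot x" "a \<in> comma_obj plot x Gob P" "b \<in> comma_obj plot x Gob P" for P a b v
  proof -
    have "(a, b) \<in> (comma_arr plot x Gob M P \<union> (comma_arr plot x Gob M P)\<inverse>)\<^sup>*"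
      using fin that unfolding final_subcategory_def by blast
    then show ?thesis by (rule wd_rel[OF sub])
  qed
  define l where "l P v = cval P (c P) v" for P v
  define L where "L s = (\<Sum>P\<in>{P. s P \<noteq> 0}. l P (s P))" for s :: "'a gobj \<Rightarrow> pt"
  have l0: "l P 0 = 0" for P unfolding l_def by (rule cval_zero)
  have L_eq: "L s = (\<Sum>P\<in>F. l P (s P))" if "finite F" "{P. s P \<noteq> 0} \<subseteq> F" for F s
    unfolding L_def by (rule sum.mono_neutral_left[OF that]) (auto simp: l0)
  have L_add: "L (s + t) = L s + L t" if "finite {P. s P \<noteq> 0}" "finite {P. t P \<noteq> 0}" for s t
  proof -
    define F where "F = {P. s P \<noteq> 0} \<union> {P. t P \<noteq> 0}"
    have F: "finite F" using that F_def by simp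
    have "{P. (s + t) P \<noteq> 0} \<subseteq> F" unfolding F_def by auto
    then have "L (s + t) = (\<Sum>P\<in>F. l P (s P + t P))" using L_eq[OF F] by simp
    also have "\<dots> = (\<Sum>P\<in>F. l P (s P)) + (\<Sum>P\<in>F. l P (t P))"
      unfolding l_def cval_add by (rule sum.distrib)
    also have "\<dots> = L s + L t" using L_eq[OF F] F_def by simp
    finally show ?thesis .
  qed
  have L_scale: "L (r *\<^sub>R s) = r *\<^sub>R L s" if "finite {P. s P \<noteq> 0}" for r s
  proof -
    have "{P. (r *\<^sub>R s) P \<noteq> 0} \<subseteq> {P. s P \<noteq> 0}" by (auto simp: scaleR_fun_apply)
    then have "L (r *\<^sub>R s) = (\<Sum>P\<in>{P. s P \<noteq> 0}. l P ((r *\<^sub>R s) P))" using L_eq[OF that] by simp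
    also have "\<dots> = (\<Sum>P\<in>{P. s P \<noteq> 0}. r *\<^sub>R l P (s P))"
      unfolding l_def scaleR_fun_apply cval_scale ..
    also have "\<dots> = r *\<^sub>R L s" unfolding L_def by (rule scaleR_sum_right[symmetric])
    finally show ?thesis .
  qed
  have L_inj: "L (inj_ds P v) = l P v" for P v
  proof -
    have "{Q. inj_ds P v Q \<noteq> 0} \<subseteq> {P}" by (auto simp: inj_ds_apply)
    then have "L (inj_ds P v) = (\<Sum>Q\<in>{P}. l Q (inj_ds P v Q))" using L_eq[of "{P}"] by simp
    then show ?thesis by (simp add: inj_ds_apply)
  qed
  have fin_inj: "finite {Q. inj_ds P v Q \<noteq> 0}" for P v
  proof -
    have "{Q. inj_ds P v Q \<noteq> 0} \<subseteq> {P}" by (auto simp: inj_ds_apply)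
    then show ?thesis by (rule finite_subset) simp
  qed
  define Z where "Z = {s. finite {P. s P \<noteq> 0} \<and> L s \<in> rels M}"
  have subZ: "subspace Z" unfolding subspace_def
  proof (intro conjI ballI allI)
    have "L 0 = 0" unfolding L_def by simp
    moreover have "(0::'a gobj \<Rightarrow> pt) \<in> rels M" by (rule subspace_0[OF subspace_rels])
    moreover have "finite {P. (0::'a gobj \<Rightarrow> pt) P \<noteq> 0}" by simp
    ultimately show "0 \<in> Z" unfolding Z_def by simp
  next
    fix s t assume s: "s \<in> Z" and t: "t \<in> Z"
    have fs: "finite {P. s P \<noteq> 0}" and ft: "finite {P. t P \<noteq> 0}" using s t unfolding Z_def by auto
    have "{P. (s + t) P \<noteq> 0} \<subseteq> {P. s P \<noteq> 0} \<union> {P. t P \<noteq> 0}" by auto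
    then have "finite {P. (s + t) P \<noteq> 0}" using fs ft by (meson finite_UnI finite_subset)
    moreover have "L (s + t) \<in> rels M"
    proof -
      have "L s \<in> rels M" "L t \<in> rels M" using s t unfolding Z_def by auto
      then have "L s + L t \<in> rels M" by (rule subspace_add[OF subspace_rels])
      then show ?thesis using L_add[OF fs ft] by simp
    qed
    ultimately show "s + t \<in> Z" unfolding Z_def by simp
  next
    fix r :: real and s assume s: "s \<in> Z"
    have fs: "finite {P. s P \<noteq> 0}" using s unfolding Z_def by auto
    have "{P. (r *\<^sub>R s) P \<noteq> 0} \<subseteq> {P. s P \<noteq> 0}" by (auto simp: scaleR_fun_apply)
    then have "finite {P. (r *\<^sub>R s) P \<noteq> 0}" using fs by (rule finite_subset)
    moreover have "L (r *\<^sub>R s) \<in> rels M"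
    proof -
      have "L s \<in> rels M" using s unfolding Z_def by auto
      then have "r *\<^sub>R L s \<in> rels M" by (rule subspace_scale[OF subspace_rels])
      then show ?thesis using L_scale[OF fs] by simp
    qed
    ultimately show "r *\<^sub>R s \<in> Z" unfolding Z_def by simp
  qed
  have genZ: "inj_ds Q (diff0 (dimo P) (dimo Q) f v) - inj_ds P v \<in> Z"
    if G: "Gmor plot x P Q W f" and v: "v \<in> euclid (dimo P)" for P Q W f v
  proof -
    have PO: "P \<in> Gobj plot x" and QO: "Q \<in> Gobj plot x" and fm: "is_mor P Q W f"
      using G unfolding Gmor_def by auto
    define w where "w = diff0 (dimo P) (dimo Q) f v"
    have e1: "inj_ds Q w - inj_ds P v = inj_ds Q w + (-1) *\<^sub>R inj_ds P v"
      by (simp only: scaleR_minus1_left diff_conv_add_uminus)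
    have fm1: "finite {R. ((-1) *\<^sub>R inj_ds P v) R \<noteq> 0}"
    proof -
      have "{R. ((-1) *\<^sub>R inj_ds P v) R \<noteq> 0} \<subseteq> {P}" by (auto simp: scaleR_fun_apply inj_ds_apply)
      then show ?thesis by (rule finite_subset) simp
    qed
    have "L (inj_ds Q w - inj_ds P v) = L (inj_ds Q w) + L ((-1) *\<^sub>R inj_ds P v)"
      unfolding e1 by (rule L_add[OF fin_inj fm1])
    also have "L ((-1) *\<^sub>R inj_ds P v) = (-1) *\<^sub>R L (inj_ds P v)" by (rule L_scale[OF fin_inj])
    also have "L (inj_ds Q w) + (-1) *\<^sub>R L (inj_ds P v) = l Q w - l P v"
      unfolding L_inj by (simp only: scaleR_minus1_left diff_conv_add_uminus)
    finally have Lg: "L (inj_ds Q w - inj_ds P v) = l Q w - l P v" .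
    obtain Q' W' g' where cQ: "c Q = (Q', W', g')" by (cases "c Q") auto
    have cQ': "Q' \<in> Gob" "Gmor plot x Q Q' W' g'" using cP[OF QO] unfolding cQ comma_obj_def by auto
    have gm: "is_mor Q Q' W' g'" using cQ'(2) unfolding Gmor_def by blast
    have Qe: "domo Q \<subseteq> euclid (dimo Q)" using Gobj_props(2)[of Q plot x] QO by blast
    have comp: "is_mor P Q' (W \<inter> f -` W') (g' \<circ> f)" by (rule is_mor_comp[OF fm gm Qe])
    have Q'O: "Q' \<in> Gobj plot x" using GobO cQ'(1) by blast
    have a'm: "(Q', W \<inter> f -` W', g' \<circ> f) \<in> comma_obj plot x Gob P"
      unfolding comma_obj_def Gmor_def using cQ'(1) PO Q'O comp by simp
    have "cval P (Q', W \<inter> f -` W', g' \<circ> f) v = inj_ds Q' (diff0 (dimo P) (dimo Q') (g' \<circ> f) v)"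
      unfolding cval_def by simp
    also have "\<dots> = inj_ds Q' (diff0 (dimo Q) (dimo Q') g' w)"
      unfolding w_def using diff0_comp[OF fm gm Qe] by simp
    also have "\<dots> = l Q w" unfolding l_def cval_def cQ by simp
    finally have "l Q w = cval P (Q', W \<inter> f -` W', g' \<circ> f) v" by simp
    moreover have "cval P (Q', W \<inter> f -` W', g' \<circ> f) v - cval P (c P) v \<in> rels M"
      by (rule WD[OF PO a'm cP[OF PO]])
    ultimately have "l Q w - l P v \<in> rels M" unfolding l_def by simp
    moreover have "finite {R. (inj_ds Q w - inj_ds P v) R \<noteq> 0}"
    proof -
      have "{R. (inj_ds Q w - inj_ds P v) R \<noteq> 0} \<subseteq> {P, Q}" by (auto simp: inj_ds_apply)
      then show ?thesis by (rule finite_subset) simp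
    qed
    ultimately show ?thesis unfolding Z_def w_def[symmetric] using Lg by simp
  qed
  have "rels (Gmor plot x) \<subseteq> Z" unfolding rels_def
  proof (rule span_minimal[OF _ subZ])
    show "{inj_ds Q (diff0 (dimo P) (dimo Q) f v) - inj_ds P v |P Q W f v.
             Gmor plot x P Q W f \<and> v \<in> euclid (dimo P)} \<subseteq> Z"
      using genZ by blast
  qed
  then have LuM: "L u \<in> rels M" using uG unfolding Z_def by blast
  define S where "S = {P. u P \<noteq> 0}"
  have Sfin: "finite S" using dsumD(1)[OF u] S_def by simp
  have SG: "P \<in> Gob" if "P \<in> S" for P using dsumD(2)[OF u] that S_def by blast
  have uE: "u P \<in> euclid (dimo P)" if "P \<in> S" for P using dsumD(3)[OF u] SG[OF that] by blast
  have udec: "(\<Sum>P\<in>S. inj_ds P (u P)) = u"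
    unfolding S_def by (rule dsum_decomp[symmetric]) (use dsumD(1)[OF u] in simp)
  have "u - L u = (\<Sum>P\<in>S. inj_ds P (u P)) - (\<Sum>P\<in>S. l P (u P))" unfolding L_def S_def[symmetric] udec ..
  also have "\<dots> = (\<Sum>P\<in>S. inj_ds P (u P) - l P (u P))" by (simp add: sum_subtractf)
  also have "\<dots> \<in> rels M"
  proof (rule subspace_sum[OF subspace_rels])
    fix P assume P: "P \<in> S"
    have PG: "P \<in> Gob" by (rule SG[OF P])
    have PO: "P \<in> Gobj plot x" using GobO PG by blast
    have idm: "M P P (domo P) id" using sub_id[of plot x Gob M P] sub PG by blast
    have idmor: "is_mor P P (domo P) id" using sub_mor[of plot x Gob M P P "domo P" id] sub idm by blast
    have a0: "(P, domo P, id) \<in> comma_obj plot x Gob P"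
      unfolding comma_obj_def Gmor_def using PG PO idmor by simp
    have "cval P (P, domo P, id) (u P) = inj_ds P (u P)"
      unfolding cval_def using diff0_id[OF uE[OF P]] by simp
    moreover have "cval P (P, domo P, id) (u P) - cval P (c P) (u P) \<in> rels M"
      by (rule WD[OF PO a0 cP[OF PO]])
    ultimately show "inj_ds P (u P) - l P (u P) \<in> rels M" unfolding l_def by simp
  qed
  finally have "u - L u \<in> rels M" .
  then have "(u - L u) + L u \<in> rels M" using LuM subspace_add[OF subspace_rels] by blast
  then show ?thesis by simp
qed


theorem proposition3p2:
  fixes X :: "'a set" and plot :: "nat \<Rightarrow> pt set \<Rightarrow> (pt \<Rightarrow> 'a) \<Rightarrow> bool" and x :: 'a
    and Gob :: "'a gobj set" and M :: "'a gobj \<Rightarrow> 'a gobj \<Rightarrow> pt set \<Rightarrow> (pt \<Rightarrow> pt) \<Rightarrow> bool"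
  assumes "diffeology X plot" and "x \<in> X"
    and "local_generating_category plot x Gob M"
  shows "\<exists>\<phi>. \<phi> ` colim Gob M = tangent_space plot x
            \<and> qlinear (rels M) (rels (Gmor plot x)) (colim Gob M) \<phi>
            \<and> (\<forall>P\<in>Gob. \<forall>v\<in>euclid (dimo P). \<phi> (colim_in M P v) = colim_in (Gmor plot x) P v)
            \<and> (final_subcategory plot x Gob M \<longrightarrow> bij_betw \<phi> (colim Gob M) (tangent_space plot x))"
proof -
  have sub: "subcategory plot x Gob M"
    by (rule assms(3)[unfolded local_generating_category_def, THEN conjunct1])
  have lg: "local_generating_set plot x Gob"
    by (rule assms(3)[unfolded local_generating_category_def, THEN conjunct2])
  have sM: "subspace (rels M)" by (rule subspace_rels)
  have sG: "subspace (rels (Gmor plot x))" by (rule subspace_rels)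
  have MG: "rels M \<subseteq> rels (Gmor plot x)" using rels_M_G[of plot x Gob M] sub by blast
  have GobO: "Gob \<subseteq> Gobj plot x" using sub_Gob[of plot x Gob M] sub by blast
  define \<phi> where "\<phi> C = coset (SOME c. c \<in> C) (rels (Gmor plot x))" for C :: "('a gobj \<Rightarrow> pt) set"
  have phi: "\<phi> (coset a (rels M)) = coset a (rels (Gmor plot x))" for a
  proof -
    have "(SOME c. c \<in> coset a (rels M)) - a \<in> rels M" by (rule some_coset[OF sM])
    then have "(SOME c. c \<in> coset a (rels M)) - a \<in> rels (Gmor plot x)" using MG by blast
    then show ?thesis unfolding \<phi>_def by (rule coset_eq[OF sG])
  qed
  have colimE: "\<exists>s\<in>dsum Gob. C = coset s (rels M)" if "C \<in> colim Gob M" for C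
    using that unfolding colim_def by blast
  have img1: "\<phi> ` colim Gob M = (\<lambda>s. coset s (rels (Gmor plot x))) ` dsum Gob"
    unfolding colim_def image_image phi ..
  have ds: "dsum Gob \<subseteq> dsum (Gobj plot x)" by (rule dsum_mono[OF GobO]) (simp add: euclid_0)
  have img2: "(\<lambda>s. coset s (rels (Gmor plot x))) ` dsum Gob = tangent_space plot x"
    unfolding tangent_space_def colim_def
  proof
    show "(\<lambda>s. coset s (rels (Gmor plot x))) ` dsum Gob \<subseteq> (\<lambda>s. coset s (rels (Gmor plot x))) ` dsum (Gobj plot x)"
      using ds by (rule image_mono)
  next
    show "(\<lambda>s. coset s (rels (Gmor plot x))) ` dsum (Gobj plot x) \<subseteq> (\<lambda>s. coset s (rels (Gmor plot x))) ` dsum Gob"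
    proof
      fix C assume "C \<in> (\<lambda>s. coset s (rels (Gmor plot x))) ` dsum (Gobj plot x)"
      then obtain s where s: "s \<in> dsum (Gobj plot x)" "C = coset s (rels (Gmor plot x))" by blast
      obtain t where t: "t \<in> dsum Gob" "s - t \<in> rels (Gmor plot x)"
        using surj_part[of plot x Gob s] lg s(1) by blast
      have "C = coset t (rels (Gmor plot x))" using s(2) coset_eq[OF sG t(2)] by simp
      then show "C \<in> (\<lambda>s. coset s (rels (Gmor plot x))) ` dsum Gob" using t(1) by blast
    qed
  qed
  have img: "\<phi> ` colim Gob M = tangent_space plot x" using img1 img2 by simp
  have lin: "qlinear (rels M) (rels (Gmor plot x)) (colim Gob M) \<phi>"
    unfolding qlinear_def
  proof (intro conjI ballI allI)
    fix C D assume C: "C \<in> colim Gob M" and D: "D \<in> colim Gob M"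
    obtain s where s: "C = coset s (rels M)" using colimE[OF C] by blast
    obtain t where t: "D = coset t (rels M)" using colimE[OF D] by blast
    show "\<phi> (qplus (rels M) C D) = qplus (rels (Gmor plot x)) (\<phi> C) (\<phi> D)"
      unfolding s t phi qplus_coset[OF sM] qplus_coset[OF sG] ..
  next
    fix r C assume C: "C \<in> colim Gob M"
    obtain s where s: "C = coset s (rels M)" using colimE[OF C] by blast
    show "\<phi> (qscale (rels M) r C) = qscale (rels (Gmor plot x)) r (\<phi> C)"
      unfolding s phi qscale_coset[OF sM] qscale_coset[OF sG] ..
  qed
  have cin: "\<forall>P\<in>Gob. \<forall>v\<in>euclid (dimo P). \<phi> (colim_in M P v) = colim_in (Gmor plot x) P v"
    unfolding colim_in_def phi by blast
  have bij: "bij_betw \<phi> (colim Gob M) (tangent_space plot x)" if fin: "final_subcategory plot x Gob M"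
    unfolding bij_betw_def
  proof
    show "inj_on \<phi> (colim Gob M)"
    proof (rule inj_onI)
      fix C D assume C: "C \<in> colim Gob M" and D: "D \<in> colim Gob M" and eq: "\<phi> C = \<phi> D"
      obtain s where s: "s \<in> dsum Gob" "C = coset s (rels M)" using colimE[OF C] by blast
      obtain t where t: "t \<in> dsum Gob" "D = coset t (rels M)" using colimE[OF D] by blast
      have "coset s (rels (Gmor plot x)) = coset t (rels (Gmor plot x))" using eq unfolding s(2) t(2) phi .
      then have d: "s - t \<in> rels (Gmor plot x)" using coset_eq_iff[OF sG] by blast
      have "s - t \<in> dsum Gob" by (rule subspace_diff[OF subspace_dsum s(1) t(1)])
      then have "s - t \<in> rels M" using inj_part[of plot x Gob M "s - t"] sub fin d by blast
      then show "C = D" unfolding s(2) t(2) by (rule coset_eq[OF sM])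
    qed
  qed (rule img)
  show ?thesis using img lin cin bij by blast
qed


end
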